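(* Fix $t\in I$. If $N\ge1$, $\lambda_1,\dots,\lambda_N\in\mathbb C$ and $c_1,\dots,c_N\in\mathbb C$ are pairwise distinct with $\sum_{k=1}^N\lambda_k\mathcal E_{c_k,t}=0$ a.s., then $\sum_{k=1}^N\lambda_k c_k\langle X\rangle_t\,\mathcal E_{c_k,t}=0$ a.s. Consequently, the rule $D_t\mathcal E_{c,t}:=c\langle X\rangle_t\mathcal E_{c,t}$ ($c\in\mathbb C$), extended by linearity, gives a well-defined linear operator $D_t:V_t\to V_t$.
   Context: Let $(\Omega,\mathcal F,P)$ be a probability space with a filtration $\{\mathcal F_t\}_{t\in I}$, where $I=[0,T]$ for some $T>0$ or $I=[0,\infty)$. Let $\{X_t\}_{t\in I}$ be a real-valued, square integrable, continuous martingale adapted to $\{\mathcal F_t\}$, with $X_0=0$ a.s., whose quadratic variation $\langle X\rangle_t$ is deterministic. For $c\in\mathbb C$ and $t\in I$ define $\mathcal E_{c,t}:=\exp\!\big(cX_t-\tfrac12 c^2\langle X\rangle_t\big)$, and let $V_t$ be the complex linear span of $\{\mathcal E_{c,t}:c\in\mathbb C\}$. *)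

theory Defs
  imports "HOL-Probability.Probability"
begin

definition time_index :: "real set \<Rightarrow> bool" where
  "time_index I \<longleftrightarrow> (\<exists>T>0. I = {0..T}) \<or> I = {0..}"

definition filtration :: "'a measure \<Rightarrow> real set \<Rightarrow> (real \<Rightarrow> 'a measure) \<Rightarrow> bool" where
  "filtration M I F \<longleftrightarrow>
     (\<forall>t\<in>I. subalgebra M (F t)) \<and>
     (\<forall>s\<in>I. \<forall>t\<in>I. s \<le> t \<longrightarrow> sets (F s) \<subseteq> sets (F t))"

definition martingale ::
  "'a measure \<Rightarrow> real set \<Rightarrow> (real \<Rightarrow> 'a measure) \<Rightarrow> (real \<Rightarrow> 'a \<Rightarrow> real) \<Rightarrow> bool" where
  "martingale M I F X \<longleftrightarrow>
     (\<forall>t\<in>I. X t \<in> borel_measurable (F t)) \<and>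
     (\<forall>t\<in>I. integrable M (X t)) \<and>
     (\<forall>s\<in>I. \<forall>t\<in>I. s \<le> t \<longrightarrow>
        (AE \<omega> in M. real_cond_exp M (F s) (X t) \<omega> = X s \<omega>))"

definition sq_int_cont_martingale ::
  "'a measure \<Rightarrow> real set \<Rightarrow> (real \<Rightarrow> 'a measure) \<Rightarrow> (real \<Rightarrow> 'a \<Rightarrow> real) \<Rightarrow> bool" where
  "sq_int_cont_martingale M I F X \<longleftrightarrow>
     martingale M I F X \<and>
     (\<forall>t\<in>I. integrable M (\<lambda>\<omega>. (X t \<omega>)\<^sup>2)) \<and>
     (AE \<omega> in M. continuous_on I (\<lambda>t. X t \<omega>)) \<and>
     (AE \<omega> in M. X 0 \<omega> = 0)"

text \<open>The quadratic variation (angle bracket) of a continuous square integrable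
  martingale X is the unique continuous, nondecreasing, adapted process A with
  A_0 = 0 such that X^2 - A is a martingale.  Here we express that this process is
  deterministic, i.e. given by a function q : I \<rightarrow> real, so that q t = <X>_t.\<close>
definition deterministic_qv ::
  "'a measure \<Rightarrow> real set \<Rightarrow> (real \<Rightarrow> 'a measure) \<Rightarrow> (real \<Rightarrow> 'a \<Rightarrow> real) \<Rightarrow> (real \<Rightarrow> real) \<Rightarrow> bool" where
  "deterministic_qv M I F X q \<longleftrightarrow>
     q 0 = 0 \<and> continuous_on I q \<and> mono_on I q \<and>
     martingale M I F (\<lambda>t \<omega>. (X t \<omega>)\<^sup>2 - q t)"

definition stoch_exp ::
  "(real \<Rightarrow> 'a \<Rightarrow> real) \<Rightarrow> (real \<Rightarrow> real) \<Rightarrow> complex \<Rightarrow> real \<Rightarrow> 'a \<Rightarrow> complex" where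
  "stoch_exp X q c t \<omega> = exp (c * complex_of_real (X t \<omega>) - c\<^sup>2 * complex_of_real (q t) / 2)"

end

theory Submission
  imports Defs "HOL-Complex_Analysis.Complex_Analysis"
begin

lemma int_bdd_mult:
  fixes f Y :: "'a \<Rightarrow> real"
  assumes "integrable M f" "Y \<in> borel_measurable M" "\<And>x. x \<in> space M \<Longrightarrow> \<bar>Y x\<bar> \<le> B"
  shows "integrable M (\<lambda>x. Y x * f x)"
proof (rule Bochner_Integration.integrable_bound[where f="\<lambda>x. B * f x"])
  show "integrable M (\<lambda>x. B * f x)" using assms(1) by simp
  show "(\<lambda>x. Y x * f x) \<in> borel_measurable M" using assms(1,2) by measurable
  show "AE x in M. norm (Y x * f x) \<le> norm (B * f x)"
  proof (rule AE_I2)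
    fix x assume "x \<in> space M"
    then have "\<bar>Y x\<bar> \<le> \<bar>B\<bar>" using assms(3) by fastforce
    then show "norm (Y x * f x) \<le> norm (B * f x)"
      by (simp add: abs_mult mult_right_mono)
  qed
qed

lemma int_L2_mult:
  fixes f g :: "'a \<Rightarrow> real"
  assumes "f \<in> borel_measurable M" "g \<in> borel_measurable M"
    "integrable M (\<lambda>x. (f x)\<^sup>2)" "integrable M (\<lambda>x. (g x)\<^sup>2)"
  shows "integrable M (\<lambda>x. f x * g x)"
proof (rule Bochner_Integration.integrable_bound[where f="\<lambda>x. (f x)\<^sup>2 + (g x)\<^sup>2"])
  show "integrable M (\<lambda>x. (f x)\<^sup>2 + (g x)\<^sup>2)" using assms by simp
  show "(\<lambda>x. f x * g x) \<in> borel_measurable M" using assms by measurable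
  show "AE x in M. norm (f x * g x) \<le> norm ((f x)\<^sup>2 + (g x)\<^sup>2)"
  proof (rule AE_I2)
    fix x
    have "2 * \<bar>f x\<bar> * \<bar>g x\<bar> \<le> \<bar>f x\<bar>\<^sup>2 + \<bar>g x\<bar>\<^sup>2" by (rule sum_squares_bound)
    then have A: "2 * \<bar>f x\<bar> * \<bar>g x\<bar> \<le> (f x)\<^sup>2 + (g x)\<^sup>2" by simp
    have B: "\<bar>f x * g x\<bar> \<le> 2 * \<bar>f x\<bar> * \<bar>g x\<bar>" by (simp add: abs_mult)
    from A B have "\<bar>f x * g x\<bar> \<le> (f x)\<^sup>2 + (g x)\<^sup>2" by linarith
    then show "norm (f x * g x) \<le> norm ((f x)\<^sup>2 + (g x)\<^sup>2)" by simp
  qed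
qed

locale qv_setup = prob_space M for M :: "'a measure" +
  fixes F :: "real \<Rightarrow> 'a measure" and X :: "real \<Rightarrow> 'a \<Rightarrow> real" and q :: "real \<Rightarrow> real" and t :: real
  assumes t_nonneg: "0 \<le> t"
  and subalg: "\<And>s. 0 \<le> s \<Longrightarrow> s \<le> t \<Longrightarrow> subalgebra M (F s)"
  and filt: "\<And>s r. 0 \<le> s \<Longrightarrow> s \<le> r \<Longrightarrow> r \<le> t \<Longrightarrow> sets (F s) \<subseteq> sets (F r)"
  and adapt: "\<And>s. 0 \<le> s \<Longrightarrow> s \<le> t \<Longrightarrow> X s \<in> borel_measurable (F s)"
  and sqint: "\<And>s. 0 \<le> s \<Longrightarrow> s \<le> t \<Longrightarrow> integrable M (\<lambda>\<omega>. (X s \<omega>)\<^sup>2)"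
  and mart: "\<And>s r. 0 \<le> s \<Longrightarrow> s \<le> r \<Longrightarrow> r \<le> t \<Longrightarrow>
     AE \<omega> in M. real_cond_exp M (F s) (X r) \<omega> = X s \<omega>"
  and mart2: "\<And>s r. 0 \<le> s \<Longrightarrow> s \<le> r \<Longrightarrow> r \<le> t \<Longrightarrow>
     AE \<omega> in M. real_cond_exp M (F s) (\<lambda>\<omega>. (X r \<omega>)\<^sup>2 - q r) \<omega> = (X s \<omega>)\<^sup>2 - q s"
  and cont: "AE \<omega> in M. continuous_on {0..t} (\<lambda>s. X s \<omega>)"
  and q0: "q 0 = 0" and qcont: "continuous_on {0..t} q"
  and qmono: "\<And>s r. 0 \<le> s \<Longrightarrow> s \<le> r \<Longrightarrow> r \<le> t \<Longrightarrow> q s \<le> q r"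
begin

lemma sfs: "0 \<le> s \<Longrightarrow> s \<le> t \<Longrightarrow> sigma_finite_subalgebra M (F s)"
  by (intro finite_measure_subalgebra_is_sigma_finite)
     (simp add: finite_measure_subalgebra_def finite_measure_subalgebra_axioms_def
        finite_measure_axioms subalg)

lemma Fmeas: "0 \<le> s \<Longrightarrow> s \<le> t \<Longrightarrow> f \<in> borel_measurable (F s) \<Longrightarrow> f \<in> borel_measurable M"
  using measurable_from_subalg subalg by blast

lemma Xmeas: "0 \<le> s \<Longrightarrow> s \<le> t \<Longrightarrow> X s \<in> borel_measurable M"
  using Fmeas adapt by blast

lemma Xint: "0 \<le> s \<Longrightarrow> s \<le> t \<Longrightarrow> integrable M (X s)"
proof -
  assume a: "0 \<le> s" "s \<le> t"
  show ?thesis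
  proof (rule Bochner_Integration.integrable_bound[where f="\<lambda>x. 1 + (X s x)\<^sup>2"])
    show "integrable M (\<lambda>x. 1 + (X s x)\<^sup>2)" using sqint[OF a] by simp
    show "X s \<in> borel_measurable M" using Xmeas[OF a] .
    show "AE x in M. norm (X s x) \<le> norm (1 + (X s x)\<^sup>2)"
    proof (rule AE_I2)
      fix x
      have "\<bar>X s x\<bar> \<le> 1 + (X s x)\<^sup>2"
      proof (cases "\<bar>X s x\<bar> \<le> 1")
        case False
        then have a: "1 \<le> \<bar>X s x\<bar>" by simp
        have "\<bar>X s x\<bar> * 1 \<le> \<bar>X s x\<bar> * \<bar>X s x\<bar>" using a by (intro mult_left_mono) auto
        then show ?thesis using abs_mult_self_eq[of "X s x"] by (simp add: power2_eq_square)
      next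
        case True
        then show ?thesis using zero_le_power2[of "X s x"] by linarith
      qed
      then show "norm (X s x) \<le> norm (1 + (X s x)\<^sup>2)" by simp
    qed
  qed
qed

lemma Fmeas_mono: "0 \<le> s \<Longrightarrow> s \<le> r \<Longrightarrow> r \<le> t \<Longrightarrow> f \<in> borel_measurable (F s) \<Longrightarrow> f \<in> borel_measurable (F r)"
proof -
  assume a: "0 \<le> s" "s \<le> r" "r \<le> t" "f \<in> borel_measurable (F s)"
  have "space (F s) = space (F r)" using subalg[of s] subalg[of r] a unfolding subalgebra_def by auto
  then show ?thesis using a(4) filt[OF a(1-3)] unfolding measurable_def by auto
qed

lemma test1:
  assumes "0 \<le> s" "s \<le> r" "r \<le> t" "g \<in> borel_measurable (F s)" "integrable M (\<lambda>\<omega>. g \<omega> * X r \<omega>)"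
  shows "(\<integral>\<omega>. g \<omega> * X r \<omega> \<partial>M) = (\<integral>\<omega>. g \<omega> * X s \<omega> \<partial>M)"
proof -
  interpret S: sigma_finite_subalgebra M "F s" using sfs assms by simp
  have r: "0 \<le> r" "r \<le> t" using assms by auto
  have "(\<integral>\<omega>. g \<omega> * X r \<omega> \<partial>M) = (\<integral>\<omega>. g \<omega> * real_cond_exp M (F s) (X r) \<omega> \<partial>M)"
    using S.real_cond_exp_intg(2)[OF assms(5) assms(4) Xmeas[OF r]] by simp
  also have "\<dots> = (\<integral>\<omega>. g \<omega> * X s \<omega> \<partial>M)"
  proof (rule integral_cong_AE)
    show "(\<lambda>\<omega>. g \<omega> * real_cond_exp M (F s) (X r) \<omega>) \<in> borel_measurable M"
      using Fmeas[OF _ _ assms(4)] assms by (intro borel_measurable_times) (auto intro: borel_measurable_cond_exp2)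
    show "(\<lambda>\<omega>. g \<omega> * X s \<omega>) \<in> borel_measurable M"
      using Fmeas[OF _ _ assms(4)] Xmeas[of s] assms by (intro borel_measurable_times) auto
    show "AE \<omega> in M. g \<omega> * real_cond_exp M (F s) (X r) \<omega> = g \<omega> * X s \<omega>"
      using mart[OF assms(1-3)] by eventually_elim simp
  qed
  finally show ?thesis .
qed

lemma test2:
  assumes "0 \<le> s" "s \<le> r" "r \<le> t" "g \<in> borel_measurable (F s)" "\<And>x. x \<in> space M \<Longrightarrow> \<bar>g x\<bar> \<le> B"
  shows "(\<integral>\<omega>. g \<omega> * ((X r \<omega>)\<^sup>2 - q r) \<partial>M) = (\<integral>\<omega>. g \<omega> * ((X s \<omega>)\<^sup>2 - q s) \<partial>M)"
proof -
  interpret S: sigma_finite_subalgebra M "F s" using sfs assms by simp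
  have r: "0 \<le> r" "r \<le> t" using assms by auto
  have gM: "g \<in> borel_measurable M" using Fmeas[OF _ _ assms(4)] assms by simp
  have ir: "integrable M (\<lambda>\<omega>. (X r \<omega>)\<^sup>2 - q r)" using sqint[OF r] by simp
  have int: "integrable M (\<lambda>\<omega>. g \<omega> * ((X r \<omega>)\<^sup>2 - q r))"
    by (rule int_bdd_mult[OF ir gM assms(5)])
  have mr: "(\<lambda>\<omega>. (X r \<omega>)\<^sup>2 - q r) \<in> borel_measurable M" using Xmeas[OF r] by measurable
  have "(\<integral>\<omega>. g \<omega> * ((X r \<omega>)\<^sup>2 - q r) \<partial>M) = (\<integral>\<omega>. g \<omega> * real_cond_exp M (F s) (\<lambda>\<omega>. (X r \<omega>)\<^sup>2 - q r) \<omega> \<partial>M)"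
    using S.real_cond_exp_intg(2)[OF int assms(4) mr] by simp
  also have "\<dots> = (\<integral>\<omega>. g \<omega> * ((X s \<omega>)\<^sup>2 - q s) \<partial>M)"
  proof (rule integral_cong_AE)
    show "(\<lambda>\<omega>. g \<omega> * real_cond_exp M (F s) (\<lambda>\<omega>. (X r \<omega>)\<^sup>2 - q r) \<omega>) \<in> borel_measurable M"
      using gM by (intro borel_measurable_times) (auto intro: borel_measurable_cond_exp2)
    show "(\<lambda>\<omega>. g \<omega> * ((X s \<omega>)\<^sup>2 - q s)) \<in> borel_measurable M"
      using gM Xmeas[of s] assms by simp
    show "AE \<omega> in M. g \<omega> * real_cond_exp M (F s) (\<lambda>\<omega>. (X r \<omega>)\<^sup>2 - q r) \<omega> = g \<omega> * ((X s \<omega>)\<^sup>2 - q s)"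
      using mart2[OF assms(1-3)] by eventually_elim simp
  qed
  finally show ?thesis .
qed

lemma incr1:
  assumes "0 \<le> s" "s \<le> r" "r \<le> t" "Y \<in> borel_measurable (F s)" "\<And>x. x \<in> space M \<Longrightarrow> \<bar>Y x\<bar> \<le> B"
  shows "(\<integral>\<omega>. Y \<omega> * (X r \<omega> - X s \<omega>) \<partial>M) = 0"
proof -
  have r: "0 \<le> r" "r \<le> t" and s: "0 \<le> s" "s \<le> t" using assms by auto
  have YM: "Y \<in> borel_measurable M" using Fmeas[OF _ _ assms(4)] assms by simp
  have i1: "integrable M (\<lambda>\<omega>. Y \<omega> * X r \<omega>)" by (rule int_bdd_mult[OF Xint[OF r] YM assms(5)])
  have i2: "integrable M (\<lambda>\<omega>. Y \<omega> * X s \<omega>)" by (rule int_bdd_mult[OF Xint[OF s] YM assms(5)])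
  have "(\<integral>\<omega>. Y \<omega> * (X r \<omega> - X s \<omega>) \<partial>M) = (\<integral>\<omega>. Y \<omega> * X r \<omega> \<partial>M) - (\<integral>\<omega>. Y \<omega> * X s \<omega> \<partial>M)"
    using i1 i2 by (simp add: right_diff_distrib)
  also have "\<dots> = 0" using test1[OF assms(1-4) i1] by simp
  finally show ?thesis .
qed

lemma incr2:
  assumes "0 \<le> s" "s \<le> r" "r \<le> t" "Y \<in> borel_measurable (F s)" "\<And>x. x \<in> space M \<Longrightarrow> \<bar>Y x\<bar> \<le> B"
  shows "(\<integral>\<omega>. Y \<omega> * (X r \<omega> - X s \<omega>)\<^sup>2 \<partial>M) = (q r - q s) * (\<integral>\<omega>. Y \<omega> \<partial>M)"
proof -
  have r: "0 \<le> r" "r \<le> t" and s: "0 \<le> s" "s \<le> t" using assms by auto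
  have YM: "Y \<in> borel_measurable M" using Fmeas[OF _ _ assms(4)] assms by simp
  have YI: "integrable M Y"
    using int_bdd_mult[OF integrable_const[of 1] YM assms(5)] by simp
  have i1: "integrable M (\<lambda>\<omega>. Y \<omega> * ((X r \<omega>)\<^sup>2 - q r))"
    by (rule int_bdd_mult[OF _ YM assms(5)]) (use sqint[OF r] in simp)
  have i2: "integrable M (\<lambda>\<omega>. Y \<omega> * ((X s \<omega>)\<^sup>2 - q s))"
    by (rule int_bdd_mult[OF _ YM assms(5)]) (use sqint[OF s] in simp)
  have i3: "integrable M (\<lambda>\<omega>. Y \<omega> * (X s \<omega> * X r \<omega>))"
    by (rule int_bdd_mult[OF int_L2_mult[OF Xmeas[OF s] Xmeas[OF r] sqint[OF s] sqint[OF r]] YM assms(5)])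
  have i4: "integrable M (\<lambda>\<omega>. Y \<omega> * (X s \<omega>)\<^sup>2)"
    by (rule int_bdd_mult[OF sqint[OF s] YM assms(5)])
  have i3': "integrable M (\<lambda>\<omega>. (Y \<omega> * X s \<omega>) * X r \<omega>)" using i3 by (simp add: ac_simps)
  have gm: "(\<lambda>\<omega>. Y \<omega> * X s \<omega>) \<in> borel_measurable (F s)" using assms(4) adapt[OF s] by measurable
  have t1: "(\<integral>\<omega>. (Y \<omega> * X s \<omega>) * X r \<omega> \<partial>M) = (\<integral>\<omega>. Y \<omega> * (X s \<omega>)\<^sup>2 \<partial>M)"
    using test1[OF assms(1-3) gm i3'] by (simp add: power2_eq_square ac_simps)
  have eq: "(\<lambda>\<omega>. Y \<omega> * (X r \<omega> - X s \<omega>)\<^sup>2) = (\<lambda>\<omega>. Y \<omega> * ((X r \<omega>)\<^sup>2 - q r) - 2 * ((Y \<omega> * X s \<omega>) * X r \<omega>) + Y \<omega> * (X s \<omega>)\<^sup>2 + q r * Y \<omega>)"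
    by (auto simp: power2_eq_square algebra_simps)
  have "(\<integral>\<omega>. Y \<omega> * (X r \<omega> - X s \<omega>)\<^sup>2 \<partial>M) = (\<integral>\<omega>. Y \<omega> * ((X r \<omega>)\<^sup>2 - q r) \<partial>M) - 2 * (\<integral>\<omega>. (Y \<omega> * X s \<omega>) * X r \<omega> \<partial>M) + (\<integral>\<omega>. Y \<omega> * (X s \<omega>)\<^sup>2 \<partial>M) + q r * (\<integral>\<omega>. Y \<omega> \<partial>M)"
    unfolding eq using i1 i3' i4 YI by simp
  also have "\<dots> = (\<integral>\<omega>. Y \<omega> * ((X s \<omega>)\<^sup>2 - q s) \<partial>M) + q r * (\<integral>\<omega>. Y \<omega> \<partial>M) - (\<integral>\<omega>. Y \<omega> * (X s \<omega>)\<^sup>2 \<partial>M)"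
    using t1 test2[OF assms(1-5)] by simp
  also have "(\<integral>\<omega>. Y \<omega> * ((X s \<omega>)\<^sup>2 - q s) \<partial>M) = (\<integral>\<omega>. Y \<omega> * (X s \<omega>)\<^sup>2 \<partial>M) - q s * (\<integral>\<omega>. Y \<omega> \<partial>M)"
    using i4 YI by (simp add: right_diff_distrib ac_simps)
  finally show ?thesis by (simp add: algebra_simps)
qed

end


definition Rm :: "real \<Rightarrow> complex" where
  "Rm x = iexp x - (1 + \<i> * complex_of_real x - complex_of_real (x\<^sup>2 / 2))"

lemma Rm_bound3: "cmod (Rm x) \<le> \<bar>x\<bar>^3 / 6"
proof -
  have "(\<Sum>k \<le> 2. (\<i> * complex_of_real x)^k / fact k) = 1 + \<i> * complex_of_real x - complex_of_real (x\<^sup>2 / 2)"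
    by (simp add: numeral_2_eq_2 power2_eq_square field_simps)
  then show ?thesis using iexp_approx1[of x 2] by (simp add: Rm_def numeral_3_eq_3)
qed

lemma Rm_bound2: "cmod (Rm x) \<le> x\<^sup>2"
proof -
  have "(\<Sum>k \<le> 2. (\<i> * complex_of_real x)^k / fact k) = 1 + \<i> * complex_of_real x - complex_of_real (x\<^sup>2 / 2)"
    by (simp add: numeral_2_eq_2 power2_eq_square field_simps)
  then show ?thesis using iexp_approx2[of x 2] by (simp add: Rm_def)
qed

lemma Rm_meas[measurable]: "Rm \<in> borel_measurable borel"
  unfolding Rm_def by (intro borel_measurable_continuous_onI continuous_intros) auto

lemma exp_taylor_aux:
  fixes a :: real assumes "0 \<le> a"
  shows "\<bar>exp a * (1 - a) - 1\<bar> \<le> a\<^sup>2 * exp a"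
proof -
  have e1: "1 - a \<le> exp (- a)" using exp_ge_add_one_self[of "-a"] by simp
  have "exp a * (1 - a) \<le> exp a * exp (-a)" using e1 by (intro mult_left_mono) auto
  then have up: "exp a * (1 - a) \<le> 1" by (simp add: exp_minus)
  have e2: "2 + 2 * a + a\<^sup>2 \<le> 2 * exp a" using exp_lower_Taylor_quadratic[OF assms] by simp
  have pos: "0 \<le> 1 - a + a\<^sup>2"
  proof -
    have "2 * a \<le> a * a + 1" using sum_squares_bound[of a 1] by (simp add: power2_eq_square)
    moreover have "0 \<le> a * a" by simp
    ultimately show ?thesis unfolding power2_eq_square by linarith
  qed
  have "(2 + 2 * a + a\<^sup>2) * (1 - a + a\<^sup>2) \<le> (2 * exp a) * (1 - a + a\<^sup>2)"
    using e2 pos by (intro mult_right_mono) auto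
  moreover have "(2 + 2 * a + a\<^sup>2) * (1 - a + a\<^sup>2) = 2 + a\<^sup>2 + a^3 + a^4"
    by (simp add: power2_eq_square power3_eq_cube power4_eq_xxxx algebra_simps)
  moreover have "0 \<le> a\<^sup>2 + a^3 + a^4" using assms by simp
  ultimately have "1 \<le> exp a * (1 - a + a\<^sup>2)" by linarith
  then have "1 - exp a * (1 - a) \<le> a\<^sup>2 * exp a" by (simp add: algebra_simps)
  with up show ?thesis by linarith
qed

lemma int_bdd_multc:
  fixes f Y :: "'a \<Rightarrow> complex"
  assumes "integrable M f" "Y \<in> borel_measurable M" "\<And>x. x \<in> space M \<Longrightarrow> cmod (Y x) \<le> B"
  shows "integrable M (\<lambda>x. Y x * f x)"
proof (rule Bochner_Integration.integrable_bound[where f="\<lambda>x. B * cmod (f x)"])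
  show "integrable M (\<lambda>x. B * cmod (f x))" using assms(1) by simp
  show "(\<lambda>x. Y x * f x) \<in> borel_measurable M" using assms(1,2) by measurable
  show "AE x in M. norm (Y x * f x) \<le> norm (B * cmod (f x))"
  proof (rule AE_I2)
    fix x assume "x \<in> space M"
    then have "cmod (Y x) \<le> \<bar>B\<bar>" using assms(3) by fastforce
    then show "norm (Y x * f x) \<le> norm (B * cmod (f x))"
      by (simp add: norm_mult abs_mult mult_right_mono)
  qed
qed

lemma reR: assumes "integrable M (\<lambda>\<omega>. f \<omega> * complex_of_real (g \<omega>))" shows "Re (CLINT \<omega>|M. f \<omega> * complex_of_real (g \<omega>)) = (\<integral>\<omega>. Re (f \<omega>) * g \<omega> \<partial>M)"
proof -
  have "Re (CLINT \<omega>|M. f \<omega> * complex_of_real (g \<omega>)) = (\<integral>\<omega>. Re (f \<omega> * complex_of_real (g \<omega>)) \<partial>M)"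
    by (rule integral_Re[symmetric]) (rule assms)
  also have "\<dots> = (\<integral>\<omega>. Re (f \<omega>) * g \<omega> \<partial>M)" by (intro Bochner_Integration.integral_cong) auto
  finally show ?thesis .
qed

lemma imR: assumes "integrable M (\<lambda>\<omega>. f \<omega> * complex_of_real (g \<omega>))" shows "Im (CLINT \<omega>|M. f \<omega> * complex_of_real (g \<omega>)) = (\<integral>\<omega>. Im (f \<omega>) * g \<omega> \<partial>M)"
proof -
  have "Im (CLINT \<omega>|M. f \<omega> * complex_of_real (g \<omega>)) = (\<integral>\<omega>. Im (f \<omega> * complex_of_real (g \<omega>)) \<partial>M)"
    by (rule integral_Im[symmetric]) (rule assms)
  also have "\<dots> = (\<integral>\<omega>. Im (f \<omega>) * g \<omega> \<partial>M)" by (intro Bochner_Integration.integral_cong) auto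
  finally show ?thesis .
qed

context qv_setup
begin

lemma cincr1:
  assumes "0 \<le> s" "s \<le> r" "r \<le> t" "Y \<in> borel_measurable (F s)" "\<And>x. x \<in> space M \<Longrightarrow> cmod (Y x) \<le> B"
  shows "(CLINT \<omega>|M. Y \<omega> * complex_of_real (X r \<omega> - X s \<omega>)) = 0"
proof (rule complex_eqI)
  have mr: "(\<lambda>x. Re (Y x)) \<in> borel_measurable (F s)" using assms(4) by measurable
  have mi: "(\<lambda>x. Im (Y x)) \<in> borel_measurable (F s)" using assms(4) by measurable
  have br: "\<And>x. x \<in> space M \<Longrightarrow> \<bar>Re (Y x)\<bar> \<le> B" using assms(5) abs_Re_le_cmod order_trans by blast
  have bi: "\<And>x. x \<in> space M \<Longrightarrow> \<bar>Im (Y x)\<bar> \<le> B" using assms(5) abs_Im_le_cmod order_trans by blast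
  have rt: "0 \<le> r" "r \<le> t" and st: "0 \<le> s" "s \<le> t" using assms by auto
  have YM: "Y \<in> borel_measurable M" using Fmeas[OF st assms(4)] .
  have c1: "integrable M (\<lambda>x. 1::complex)" by simp
  have YI: "integrable M Y" using int_bdd_multc[OF c1 YM assms(5)] by simp
  have I1: "integrable M (\<lambda>\<omega>. Y \<omega> * complex_of_real (X r \<omega> - X s \<omega>))"
    by (rule int_bdd_multc[OF _ YM assms(5)]) (use Xint[OF rt] Xint[OF st] in simp)
  have I2: "integrable M (\<lambda>\<omega>. Y \<omega> * complex_of_real ((X r \<omega> - X s \<omega>)\<^sup>2))"
  proof (rule int_bdd_multc[OF _ YM assms(5)])
    have "integrable M (\<lambda>\<omega>. (X r \<omega>)\<^sup>2 - 2 * (X r \<omega> * X s \<omega>) + (X s \<omega>)\<^sup>2)"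
      using sqint[OF rt] sqint[OF st] int_L2_mult[OF Xmeas[OF rt] Xmeas[OF st] sqint[OF rt] sqint[OF st]] by simp
    moreover have "(\<lambda>\<omega>. (X r \<omega>)\<^sup>2 - 2 * (X r \<omega> * X s \<omega>) + (X s \<omega>)\<^sup>2) = (\<lambda>\<omega>. (X r \<omega> - X s \<omega>)\<^sup>2)"
      by (auto simp: power2_diff)
    ultimately have "integrable M (\<lambda>\<omega>. (X r \<omega> - X s \<omega>)\<^sup>2)" by simp
    then show "integrable M (\<lambda>\<omega>. complex_of_real ((X r \<omega> - X s \<omega>)\<^sup>2))" by (rule integrable_of_real)
  qed
  have "Re (CLINT \<omega>|M. Y \<omega> * complex_of_real (X r \<omega> - X s \<omega>)) = (\<integral>\<omega>. Re (Y \<omega>) * (X r \<omega> - X s \<omega>) \<partial>M)"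
    by (rule reR) (use I1 I2 in auto)
  also have "\<dots> = 0" by (rule incr1[OF assms(1-3) mr br])
  finally show "Re (CLINT \<omega>|M. Y \<omega> * complex_of_real (X r \<omega> - X s \<omega>)) = Re 0" by simp
  have "Im (CLINT \<omega>|M. Y \<omega> * complex_of_real (X r \<omega> - X s \<omega>)) = (\<integral>\<omega>. Im (Y \<omega>) * (X r \<omega> - X s \<omega>) \<partial>M)"
    by (rule imR) (use I1 I2 in auto)
  also have "\<dots> = 0" by (rule incr1[OF assms(1-3) mi bi])
  finally show "Im (CLINT \<omega>|M. Y \<omega> * complex_of_real (X r \<omega> - X s \<omega>)) = Im 0" by simp
qed

lemma cincr2:
  assumes "0 \<le> s" "s \<le> r" "r \<le> t" "Y \<in> borel_measurable (F s)" "\<And>x. x \<in> space M \<Longrightarrow> cmod (Y x) \<le> B"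
  shows "(CLINT \<omega>|M. Y \<omega> * complex_of_real ((X r \<omega> - X s \<omega>)\<^sup>2)) = complex_of_real (q r - q s) * (CLINT \<omega>|M. Y \<omega>)"
proof (rule complex_eqI)
  have mr: "(\<lambda>x. Re (Y x)) \<in> borel_measurable (F s)" using assms(4) by measurable
  have mi: "(\<lambda>x. Im (Y x)) \<in> borel_measurable (F s)" using assms(4) by measurable
  have br: "\<And>x. x \<in> space M \<Longrightarrow> \<bar>Re (Y x)\<bar> \<le> B" using assms(5) abs_Re_le_cmod order_trans by blast
  have bi: "\<And>x. x \<in> space M \<Longrightarrow> \<bar>Im (Y x)\<bar> \<le> B" using assms(5) abs_Im_le_cmod order_trans by blast
  have rt: "0 \<le> r" "r \<le> t" and st: "0 \<le> s" "s \<le> t" using assms by auto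
  have YM: "Y \<in> borel_measurable M" using Fmeas[OF st assms(4)] .
  have c1: "integrable M (\<lambda>x. 1::complex)" by simp
  have YI: "integrable M Y" using int_bdd_multc[OF c1 YM assms(5)] by simp
  have I1: "integrable M (\<lambda>\<omega>. Y \<omega> * complex_of_real (X r \<omega> - X s \<omega>))"
    by (rule int_bdd_multc[OF _ YM assms(5)]) (use Xint[OF rt] Xint[OF st] in simp)
  have I2: "integrable M (\<lambda>\<omega>. Y \<omega> * complex_of_real ((X r \<omega> - X s \<omega>)\<^sup>2))"
  proof (rule int_bdd_multc[OF _ YM assms(5)])
    have "integrable M (\<lambda>\<omega>. (X r \<omega>)\<^sup>2 - 2 * (X r \<omega> * X s \<omega>) + (X s \<omega>)\<^sup>2)"
      using sqint[OF rt] sqint[OF st] int_L2_mult[OF Xmeas[OF rt] Xmeas[OF st] sqint[OF rt] sqint[OF st]] by simp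
    moreover have "(\<lambda>\<omega>. (X r \<omega>)\<^sup>2 - 2 * (X r \<omega> * X s \<omega>) + (X s \<omega>)\<^sup>2) = (\<lambda>\<omega>. (X r \<omega> - X s \<omega>)\<^sup>2)"
      by (auto simp: power2_diff)
    ultimately have "integrable M (\<lambda>\<omega>. (X r \<omega> - X s \<omega>)\<^sup>2)" by simp
    then show "integrable M (\<lambda>\<omega>. complex_of_real ((X r \<omega> - X s \<omega>)\<^sup>2))" by (rule integrable_of_real)
  qed
  have "Re (CLINT \<omega>|M. Y \<omega> * complex_of_real ((X r \<omega> - X s \<omega>)\<^sup>2)) = (\<integral>\<omega>. Re (Y \<omega>) * (X r \<omega> - X s \<omega>)\<^sup>2 \<partial>M)"
    by (rule reR) (use I1 I2 in auto)
  also have "\<dots> = (q r - q s) * (\<integral>\<omega>. Re (Y \<omega>) \<partial>M)" by (rule incr2[OF assms(1-3) mr br])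
  also have "(\<integral>\<omega>. Re (Y \<omega>) \<partial>M) = Re (CLINT \<omega>|M. Y \<omega>)" by (rule integral_Re) (rule YI)
  finally show "Re (CLINT \<omega>|M. Y \<omega> * complex_of_real ((X r \<omega> - X s \<omega>)\<^sup>2)) = Re (complex_of_real (q r - q s) * (CLINT \<omega>|M. Y \<omega>))"
    by simp
  have "Im (CLINT \<omega>|M. Y \<omega> * complex_of_real ((X r \<omega> - X s \<omega>)\<^sup>2)) = (\<integral>\<omega>. Im (Y \<omega>) * (X r \<omega> - X s \<omega>)\<^sup>2 \<partial>M)"
    by (rule imR) (use I1 I2 in auto)
  also have "\<dots> = (q r - q s) * (\<integral>\<omega>. Im (Y \<omega>) \<partial>M)" by (rule incr2[OF assms(1-3) mi bi])
  also have "(\<integral>\<omega>. Im (Y \<omega>) \<partial>M) = Im (CLINT \<omega>|M. Y \<omega>)" by (rule integral_Im) (rule YI)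
  finally show "Im (CLINT \<omega>|M. Y \<omega> * complex_of_real ((X r \<omega> - X s \<omega>)\<^sup>2)) = Im (complex_of_real (q r - q s) * (CLINT \<omega>|M. Y \<omega>))"
    by simp
qed

definition tt :: "nat \<Rightarrow> nat \<Rightarrow> real" where "tt n j = t * real j / real n"
definition S :: "nat \<Rightarrow> nat \<Rightarrow> 'a \<Rightarrow> real" where "S n j \<omega> = X (tt n j) \<omega>"
definition G :: "nat \<Rightarrow> real \<Rightarrow> nat \<Rightarrow> 'a \<Rightarrow> bool" where "G n K j \<omega> \<longleftrightarrow> (\<forall>i\<in>{..j}. \<bar>S n i \<omega>\<bar> \<le> K)"
definition gi :: "nat \<Rightarrow> real \<Rightarrow> nat \<Rightarrow> 'a \<Rightarrow> real" where "gi n K j \<omega> = (if G n K j \<omega> then 1 else 0)"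
definition Dl :: "nat \<Rightarrow> nat \<Rightarrow> 'a \<Rightarrow> real" where "Dl n j \<omega> = S n (Suc j) \<omega> - S n j \<omega>"
definition dq :: "nat \<Rightarrow> nat \<Rightarrow> real" where "dq n j = q (tt n (Suc j)) - q (tt n j)"
definition Z :: "real \<Rightarrow> nat \<Rightarrow> nat \<Rightarrow> 'a \<Rightarrow> complex" where
  "Z u n j \<omega> = iexp (u * S n j \<omega>) * complex_of_real (exp (u\<^sup>2 * q (tt n j) / 2))"

lemma tt_nonneg: "0 \<le> tt n j" using t_nonneg by (simp add: tt_def)
lemma tt_le: "j \<le> n \<Longrightarrow> tt n j \<le> t"
proof -
  assume "j \<le> n"
  then have "t * real j \<le> t * real n" using t_nonneg by (intro mult_left_mono) auto
  then show ?thesis unfolding tt_def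
    by (cases "n = 0") (auto simp: divide_le_eq t_nonneg)
qed
lemma tt_mono: "i \<le> j \<Longrightarrow> tt n i \<le> tt n j"
  unfolding tt_def using t_nonneg by (auto intro!: divide_right_mono mult_left_mono)
lemma tt_n: "0 < n \<Longrightarrow> tt n n = t" by (simp add: tt_def)

lemma S_F: "i \<le> j \<Longrightarrow> j \<le> n \<Longrightarrow> S n i \<in> borel_measurable (F (tt n j))"
proof -
  assume a: "i \<le> j" "j \<le> n"
  have "X (tt n i) \<in> borel_measurable (F (tt n i))" using adapt tt_nonneg tt_le a by auto
  then have "X (tt n i) \<in> borel_measurable (F (tt n j))"
    using Fmeas_mono[of "tt n i" "tt n j"] tt_nonneg tt_mono tt_le a by auto
  then show ?thesis unfolding S_def[abs_def] by simp
qed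

lemma S_M[measurable]: "j \<le> n \<Longrightarrow> S n j \<in> borel_measurable M"
  using Fmeas[OF tt_nonneg tt_le S_F] by blast

lemma gi_F: "j \<le> n \<Longrightarrow> gi n K j \<in> borel_measurable (F (tt n j))"
proof -
  assume a: "j \<le> n"
  have [measurable]: "\<And>i. i \<in> {..j} \<Longrightarrow> S n i \<in> borel_measurable (F (tt n j))" using S_F a by auto
  show ?thesis unfolding gi_def[abs_def] G_def by measurable
qed

end


context qv_setup
begin

lemma dq_nonneg: "j < n \<Longrightarrow> 0 \<le> dq n j"
  unfolding dq_def using qmono[of "tt n j" "tt n (Suc j)"] tt_nonneg tt_mono[of j "Suc j" n] tt_le[of "Suc j" n] by auto

lemma q_nonneg: "0 \<le> s \<Longrightarrow> s \<le> t \<Longrightarrow> 0 \<le> q s"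
  using qmono[of 0 s] q0 by auto

lemma dq_le: "j < n \<Longrightarrow> dq n j \<le> q t"
proof -
  assume a: "j < n"
  have "q (tt n (Suc j)) \<le> q t" using qmono[of "tt n (Suc j)" t] tt_nonneg tt_le[of "Suc j" n] a by auto
  moreover have "0 \<le> q (tt n j)" using q_nonneg tt_nonneg tt_le[of j n] a by auto
  ultimately show ?thesis unfolding dq_def by linarith
qed

lemma Z_F: "j \<le> n \<Longrightarrow> Z u n j \<in> borel_measurable (F (tt n j))"
proof -
  assume a: "j \<le> n"
  have [measurable]: "S n j \<in> borel_measurable (F (tt n j))" using S_F[of j j n] a by auto
  show ?thesis unfolding Z_def[abs_def] by measurable
qed

lemma Z_M[measurable]: "j \<le> n \<Longrightarrow> Z u n j \<in> borel_measurable M"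
  using Fmeas[OF tt_nonneg tt_le Z_F] by blast

lemma gi_M[measurable]: "j \<le> n \<Longrightarrow> gi n K j \<in> borel_measurable M"
  using Fmeas[OF tt_nonneg tt_le gi_F] by blast

lemma Dl_M[measurable]: "j < n \<Longrightarrow> Dl n j \<in> borel_measurable M"
  unfolding Dl_def[abs_def] by measurable

lemma gi_01: "gi n K j \<omega> = 0 \<or> gi n K j \<omega> = 1" by (simp add: gi_def)
lemma gi_nonneg: "0 \<le> gi n K j \<omega>" by (simp add: gi_def)
lemma gi_le1: "gi n K j \<omega> \<le> 1" by (simp add: gi_def)

lemma Z_bound: "j \<le> n \<Longrightarrow> cmod (Z u n j \<omega>) \<le> exp (u\<^sup>2 * q t / 2)"
proof -
  assume a: "j \<le> n"
  have "q (tt n j) \<le> q t" using qmono[of "tt n j" t] tt_nonneg tt_le a by auto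
  then have "u\<^sup>2 * q (tt n j) / 2 \<le> u\<^sup>2 * q t / 2" by (intro divide_right_mono mult_left_mono) auto
  then show ?thesis unfolding Z_def by (simp add: norm_mult)
qed

lemma Dl_int: "j < n \<Longrightarrow> integrable M (Dl n j)"
proof -
  assume a: "j < n"
  have r: "0 \<le> tt n (Suc j)" "tt n (Suc j) \<le> t" using tt_nonneg tt_le[of "Suc j" n] a by auto
  have s: "0 \<le> tt n j" "tt n j \<le> t" using tt_nonneg tt_le[of j n] a by auto
  show ?thesis unfolding Dl_def[abs_def] S_def using Xint[OF r] Xint[OF s] by simp
qed

lemma Dl2_int: "j < n \<Longrightarrow> integrable M (\<lambda>\<omega>. (Dl n j \<omega>)\<^sup>2)"
proof -
  assume a: "j < n"
  have r: "0 \<le> tt n (Suc j)" "tt n (Suc j) \<le> t" using tt_nonneg tt_le[of "Suc j" n] a by auto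
  have s: "0 \<le> tt n j" "tt n j \<le> t" using tt_nonneg tt_le[of j n] a by auto
  let ?r = "tt n (Suc j)" and ?s = "tt n j"
  have "integrable M (\<lambda>\<omega>. (X ?r \<omega>)\<^sup>2 - 2 * (X ?r \<omega> * X ?s \<omega>) + (X ?s \<omega>)\<^sup>2)"
    using sqint[OF r] sqint[OF s] int_L2_mult[OF Xmeas[OF r] Xmeas[OF s] sqint[OF r] sqint[OF s]] by simp
  moreover have "(\<lambda>\<omega>. (X ?r \<omega>)\<^sup>2 - 2 * (X ?r \<omega> * X ?s \<omega>) + (X ?s \<omega>)\<^sup>2) = (\<lambda>\<omega>. (Dl n j \<omega>)\<^sup>2)"
    by (auto simp: power2_diff Dl_def S_def)
  ultimately show ?thesis by simp
qed

lemma Rm_int: "j < n \<Longrightarrow> integrable M (\<lambda>\<omega>. Rm (u * Dl n j \<omega>))"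
proof (rule Bochner_Integration.integrable_bound[where f="\<lambda>\<omega>. u\<^sup>2 * (Dl n j \<omega>)\<^sup>2"])
  assume a: "j < n"
  show "integrable M (\<lambda>\<omega>. u\<^sup>2 * (Dl n j \<omega>)\<^sup>2)" using Dl2_int[OF a] by simp
  show "(\<lambda>\<omega>. Rm (u * Dl n j \<omega>)) \<in> borel_measurable M" using a by measurable
  show "AE \<omega> in M. norm (Rm (u * Dl n j \<omega>)) \<le> norm (u\<^sup>2 * (Dl n j \<omega>)\<^sup>2)"
    using Rm_bound2[of "u * Dl n j _"] by (intro AE_I2) (simp add: power_mult_distrib)
qed

lemma Z_Suc:
  "Z u n (Suc j) \<omega> = Z u n j \<omega> * iexp (u * Dl n j \<omega>) * complex_of_real (exp (u\<^sup>2 * dq n j / 2))"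
proof -
  have e1: "iexp (u * S n (Suc j) \<omega>) = iexp (u * S n j \<omega>) * iexp (u * Dl n j \<omega>)"
  proof -
    have "\<i> * complex_of_real (u * S n (Suc j) \<omega>) = \<i> * complex_of_real (u * S n j \<omega>) + \<i> * complex_of_real (u * Dl n j \<omega>)"
      by (simp add: Dl_def algebra_simps)
    then show ?thesis by (simp add: exp_add)
  qed
  have e2: "exp (u\<^sup>2 * q (tt n (Suc j)) / 2) = exp (u\<^sup>2 * q (tt n j) / 2) * exp (u\<^sup>2 * dq n j / 2)"
  proof -
    have "u\<^sup>2 * q (tt n (Suc j)) / 2 = u\<^sup>2 * q (tt n j) / 2 + u\<^sup>2 * dq n j / 2"
      by (simp add: dq_def field_simps)
    then show ?thesis by (simp only: exp_add[symmetric])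
  qed
  show ?thesis unfolding Z_def e1 e2 by (simp add: algebra_simps)
qed

lemma step_eq:
  fixes u K :: real and n j :: nat
  assumes "0 < n" "j < n"
  defines "a \<equiv> u\<^sup>2 * dq n j / 2" and "Y \<equiv> \<lambda>\<omega>. complex_of_real (gi n K j \<omega>) * Z u n j \<omega>"
  shows "(CLINT \<omega>|M. complex_of_real (gi n K j \<omega>) * (Z u n (Suc j) \<omega> - Z u n j \<omega>))
    = (CLINT \<omega>|M. Y \<omega>) * complex_of_real (exp a * (1 - a) - 1) + complex_of_real (exp a) * (CLINT \<omega>|M. Y \<omega> * Rm (u * Dl n j \<omega>))"
proof -
  have jn: "j \<le> n" using assms by auto
  have r: "0 \<le> tt n (Suc j)" "tt n (Suc j) \<le> t" using tt_nonneg tt_le[of "Suc j" n] assms by auto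
  have s: "0 \<le> tt n j" "tt n j \<le> t" "tt n j \<le> tt n (Suc j)" using tt_nonneg tt_le[of j n] tt_mono[of j "Suc j" n] assms by auto
  define B where "B = exp (u\<^sup>2 * q t / 2)"
  have YF: "Y \<in> borel_measurable (F (tt n j))"
    unfolding Y_def using gi_F[OF jn] Z_F[OF jn] by measurable
  have YM: "Y \<in> borel_measurable M" using Fmeas[OF s(1,2) YF] .
  have YB: "\<And>\<omega>. cmod (Y \<omega>) \<le> B"
  proof -
    fix \<omega>
    have "cmod (Y \<omega>) = gi n K j \<omega> * cmod (Z u n j \<omega>)" unfolding Y_def by (simp add: norm_mult gi_def)
    also have "\<dots> \<le> 1 * B" using Z_bound[OF jn, of u \<omega>] gi_nonneg gi_le1 unfolding B_def
      by (intro mult_mono) auto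
    finally show "cmod (Y \<omega>) \<le> B" by simp
  qed
  have c1: "integrable M (\<lambda>x. 1::complex)" by simp
  have IY: "integrable M Y" using int_bdd_multc[OF c1 YM YB] by simp
  have I1: "integrable M (\<lambda>\<omega>. Y \<omega> * complex_of_real (Dl n j \<omega>))"
    by (rule int_bdd_multc[OF _ YM YB]) (use Dl_int[OF assms(2)] in simp)
  have I2: "integrable M (\<lambda>\<omega>. Y \<omega> * complex_of_real ((Dl n j \<omega>)\<^sup>2))"
    by (rule int_bdd_multc[OF _ YM YB]) (use Dl2_int[OF assms(2)] in \<open>rule integrable_of_real\<close>)
  have I3: "integrable M (\<lambda>\<omega>. Y \<omega> * Rm (u * Dl n j \<omega>))"
    by (rule int_bdd_multc[OF Rm_int[OF assms(2)] YM YB])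
  have C1: "(CLINT \<omega>|M. Y \<omega> * complex_of_real (Dl n j \<omega>)) = 0"
    using cincr1[OF s(1) s(3) r(2) YF, of B] YB unfolding Dl_def S_def by simp
  have C2: "(CLINT \<omega>|M. Y \<omega> * complex_of_real ((Dl n j \<omega>)\<^sup>2)) = complex_of_real (dq n j) * (CLINT \<omega>|M. Y \<omega>)"
    using cincr2[OF s(1) s(3) r(2) YF, of B] YB unfolding Dl_def S_def dq_def by simp
  have pw: "\<And>\<omega>. complex_of_real (gi n K j \<omega>) * (Z u n (Suc j) \<omega> - Z u n j \<omega>) =
      Y \<omega> * complex_of_real (exp a - 1) + (\<i> * complex_of_real (u * exp a)) * (Y \<omega> * complex_of_real (Dl n j \<omega>))
      - complex_of_real (exp a * u\<^sup>2 / 2) * (Y \<omega> * complex_of_real ((Dl n j \<omega>)\<^sup>2))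
      + complex_of_real (exp a) * (Y \<omega> * Rm (u * Dl n j \<omega>))"
  proof -
    fix \<omega>
    have ie: "iexp (u * Dl n j \<omega>) = 1 + \<i> * complex_of_real (u * Dl n j \<omega>) - complex_of_real ((u * Dl n j \<omega>)\<^sup>2 / 2) + Rm (u * Dl n j \<omega>)"
      by (simp add: Rm_def)
    show "?thesis \<omega>" unfolding Z_Suc ie Y_def a_def
      by (simp add: algebra_simps power2_eq_square)
  qed
  have "(CLINT \<omega>|M. complex_of_real (gi n K j \<omega>) * (Z u n (Suc j) \<omega> - Z u n j \<omega>))
     = (CLINT \<omega>|M. Y \<omega>) * complex_of_real (exp a - 1) + (\<i> * complex_of_real (u * exp a)) * (CLINT \<omega>|M. Y \<omega> * complex_of_real (Dl n j \<omega>))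
      - complex_of_real (exp a * u\<^sup>2 / 2) * (CLINT \<omega>|M. Y \<omega> * complex_of_real ((Dl n j \<omega>)\<^sup>2))
      + complex_of_real (exp a) * (CLINT \<omega>|M. Y \<omega> * Rm (u * Dl n j \<omega>))"
    unfolding pw using IY I1 I2 I3 by simp
  also have "\<dots> = (CLINT \<omega>|M. Y \<omega>) * complex_of_real (exp a * (1 - a) - 1) + complex_of_real (exp a) * (CLINT \<omega>|M. Y \<omega> * Rm (u * Dl n j \<omega>))"
    unfolding C1 C2 a_def by (simp add: algebra_simps)
  finally show ?thesis .
qed

end


lemma tele_aux:
  fixes z :: "nat \<Rightarrow> complex" and g :: "nat \<Rightarrow> real"
  assumes mono: "\<And>i j. i \<le> j \<Longrightarrow> g j = 1 \<Longrightarrow> g i = 1"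
    and g01: "\<And>j. g j = 0 \<or> g j = 1" and zb: "\<And>j. cmod (z j) \<le> B"
  shows "cmod (\<Sum>j<m. complex_of_real (1 - g j) * (z (Suc j) - z j)) \<le> 2 * B * (1 - g m)"
proof -
  have ex: "\<exists>k. (\<Sum>j<m'. complex_of_real (1 - g j) * (z (Suc j) - z j)) = z m' - z k" for m'
  proof (induction m')
    case 0 then show ?case by (intro exI[of _ 0]) simp
  next
    case (Suc m')
    then obtain k where k: "(\<Sum>j<m'. complex_of_real (1 - g j) * (z (Suc j) - z j)) = z m' - z k" by blast
    show ?case
    proof (cases "g m' = 1")
      case True
      then have "\<forall>j\<in>{..<Suc m'}. g j = 1" using mono[of _ m'] by (auto simp: less_Suc_eq_le)
      then have "(\<Sum>j<Suc m'. complex_of_real (1 - g j) * (z (Suc j) - z j)) = 0" by simp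
      then show ?thesis by (intro exI[of _ "Suc m'"]) simp
    next
      case False
      then have "g m' = 0" using g01 by blast
      then show ?thesis using k by (intro exI[of _ k]) simp
    qed
  qed
  show ?thesis
  proof (cases "g m = 1")
    case True
    then have "\<forall>j\<in>{..<m}. g j = 1" using mono[of _ m] by auto
    then show ?thesis using True by simp
  next
    case False
    then have "g m = 0" using g01 by blast
    obtain k where k: "(\<Sum>j<m. complex_of_real (1 - g j) * (z (Suc j) - z j)) = z m - z k" using ex by blast
    have "cmod (z m - z k) \<le> cmod (z m) + cmod (z k)" by (rule norm_triangle_ineq4)
    also have "\<dots> \<le> 2 * B" using zb[of m] zb[of k] by simp
    finally show ?thesis using k \<open>g m = 0\<close> by simp
  qed
qed

locale qv_setup0 = qv_setup +
  assumes X0: "AE \<omega> in M. X 0 \<omega> = 0"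
begin

lemma gi_mono: "i \<le> j \<Longrightarrow> gi n K j \<omega> = 1 \<Longrightarrow> gi n K i \<omega> = 1"
  by (auto simp: gi_def G_def split: if_splits)

lemma Y_facts:
  assumes "j \<le> n"
  shows "(\<lambda>\<omega>. complex_of_real (gi n K j \<omega>) * Z u n j \<omega>) \<in> borel_measurable (F (tt n j))"
    and "\<And>\<omega>. cmod (complex_of_real (gi n K j \<omega>) * Z u n j \<omega>) \<le> exp (u\<^sup>2 * q t / 2)"
    and "\<And>\<omega>. cmod (complex_of_real (gi n K j \<omega>) * Z u n j \<omega>) \<le> exp (u\<^sup>2 * q t / 2) * gi n K j \<omega>"
proof -
  show "(\<lambda>\<omega>. complex_of_real (gi n K j \<omega>) * Z u n j \<omega>) \<in> borel_measurable (F (tt n j))"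
    using gi_F[OF assms] Z_F[OF assms] by measurable
  fix \<omega>
  have "cmod (complex_of_real (gi n K j \<omega>) * Z u n j \<omega>) = gi n K j \<omega> * cmod (Z u n j \<omega>)"
    by (simp add: norm_mult gi_def)
  also have "\<dots> \<le> gi n K j \<omega> * exp (u\<^sup>2 * q t / 2)"
    using Z_bound[OF assms, of u \<omega>] gi_nonneg by (intro mult_left_mono) auto
  finally show "cmod (complex_of_real (gi n K j \<omega>) * Z u n j \<omega>) \<le> exp (u\<^sup>2 * q t / 2) * gi n K j \<omega>"
    by (simp add: mult.commute)
  then show "cmod (complex_of_real (gi n K j \<omega>) * Z u n j \<omega>) \<le> exp (u\<^sup>2 * q t / 2)"
    by (rule order_trans) (rule mult_left_le[OF gi_le1]; simp)
qed

lemma step_bound: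
  fixes u K :: real and n j :: nat
  assumes "0 < n" "j < n"
  shows "cmod (CLINT \<omega>|M. complex_of_real (gi n K j \<omega>) * (Z u n (Suc j) \<omega> - Z u n j \<omega>))
    \<le> (exp (u\<^sup>2 * q t / 2))\<^sup>2 * (u\<^sup>2 * dq n j / 2)\<^sup>2
      + (exp (u\<^sup>2 * q t / 2))\<^sup>2 * (\<integral>\<omega>. gi n K j \<omega> * cmod (Rm (u * Dl n j \<omega>)) \<partial>M)"
proof -
  define a where "a = u\<^sup>2 * dq n j / 2"
  define B where "B = exp (u\<^sup>2 * q t / 2)"
  define Y where "Y = (\<lambda>\<omega>. complex_of_real (gi n K j \<omega>) * Z u n j \<omega>)"
  have jn: "j \<le> n" using assms by auto
  have s: "0 \<le> tt n j" "tt n j \<le> t" using tt_nonneg tt_le[of j n] assms by auto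
  have YF: "Y \<in> borel_measurable (F (tt n j))" unfolding Y_def by (rule Y_facts(1)[OF jn])
  have YM: "Y \<in> borel_measurable M" using Fmeas[OF s YF] .
  have YB: "\<And>\<omega>. cmod (Y \<omega>) \<le> B" unfolding Y_def B_def by (rule Y_facts(2)[OF jn])
  have YB2: "\<And>\<omega>. cmod (Y \<omega>) \<le> B * gi n K j \<omega>" unfolding Y_def B_def by (rule Y_facts(3)[OF jn])
  have c1: "integrable M (\<lambda>x. 1::complex)" by simp
  have IY: "integrable M Y" using int_bdd_multc[OF c1 YM YB] by simp
  have I3: "integrable M (\<lambda>\<omega>. Y \<omega> * Rm (u * Dl n j \<omega>))"
    by (rule int_bdd_multc[OF Rm_int[OF assms(2)] YM YB])
  have Bpos: "0 < B" unfolding B_def by simp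
  have a0: "0 \<le> a" unfolding a_def using dq_nonneg[OF assms(2)] by simp
  have aB: "exp a \<le> B"
  proof -
    have "u\<^sup>2 * dq n j \<le> u\<^sup>2 * q t" using dq_le[OF assms(2)] by (intro mult_left_mono) auto
    then show ?thesis unfolding a_def B_def by simp
  qed
  have n1: "cmod (CLINT \<omega>|M. Y \<omega>) \<le> B"
  proof -
    have "cmod (CLINT \<omega>|M. Y \<omega>) \<le> (\<integral>\<omega>. cmod (Y \<omega>) \<partial>M)" by (rule integral_norm_bound)
    also have "\<dots> \<le> (\<integral>\<omega>. B \<partial>M)" using YB IY by (intro integral_mono) auto
    also have "\<dots> = B" by (simp add: prob_space)
    finally show ?thesis .
  qed
  have IR: "integrable M (\<lambda>\<omega>. gi n K j \<omega> * cmod (Rm (u * Dl n j \<omega>)))"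
    by (rule int_bdd_mult[where B=1]) (use Rm_int[OF assms(2)] gi_M[OF jn] gi_nonneg gi_le1 in auto)
  have n2: "cmod (CLINT \<omega>|M. Y \<omega> * Rm (u * Dl n j \<omega>)) \<le> B * (\<integral>\<omega>. gi n K j \<omega> * cmod (Rm (u * Dl n j \<omega>)) \<partial>M)"
  proof -
    have "cmod (CLINT \<omega>|M. Y \<omega> * Rm (u * Dl n j \<omega>)) \<le> (\<integral>\<omega>. cmod (Y \<omega> * Rm (u * Dl n j \<omega>)) \<partial>M)"
      by (rule integral_norm_bound)
    also have "\<dots> \<le> (\<integral>\<omega>. B * (gi n K j \<omega> * cmod (Rm (u * Dl n j \<omega>))) \<partial>M)"
    proof (intro integral_mono)
      show "integrable M (\<lambda>\<omega>. cmod (Y \<omega> * Rm (u * Dl n j \<omega>)))" using I3 by simp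
      show "integrable M (\<lambda>\<omega>. B * (gi n K j \<omega> * cmod (Rm (u * Dl n j \<omega>))))" using IR by simp
      fix \<omega>
      have "cmod (Y \<omega> * Rm (u * Dl n j \<omega>)) = cmod (Y \<omega>) * cmod (Rm (u * Dl n j \<omega>))" by (simp add: norm_mult)
      also have "\<dots> \<le> (B * gi n K j \<omega>) * cmod (Rm (u * Dl n j \<omega>))" using YB2 by (intro mult_right_mono) auto
      finally show "cmod (Y \<omega> * Rm (u * Dl n j \<omega>)) \<le> B * (gi n K j \<omega> * cmod (Rm (u * Dl n j \<omega>)))" by simp
    qed
    also have "\<dots> = B * (\<integral>\<omega>. gi n K j \<omega> * cmod (Rm (u * Dl n j \<omega>)) \<partial>M)" by simp
    finally show ?thesis .
  qed
  have "cmod (CLINT \<omega>|M. complex_of_real (gi n K j \<omega>) * (Z u n (Suc j) \<omega> - Z u n j \<omega>))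
     = cmod ((CLINT \<omega>|M. Y \<omega>) * complex_of_real (exp a * (1 - a) - 1) + complex_of_real (exp a) * (CLINT \<omega>|M. Y \<omega> * Rm (u * Dl n j \<omega>)))"
    unfolding Y_def a_def using step_eq[OF assms, where u=u and K=K] by simp
  also have "\<dots> \<le> cmod (CLINT \<omega>|M. Y \<omega>) * \<bar>exp a * (1 - a) - 1\<bar> + exp a * cmod (CLINT \<omega>|M. Y \<omega> * Rm (u * Dl n j \<omega>))"
    by (rule order_trans[OF norm_triangle_ineq]) (simp only: norm_mult norm_of_real abs_exp_cancel order_refl)
  also have "\<dots> \<le> B * (a\<^sup>2 * B) + B * (B * (\<integral>\<omega>. gi n K j \<omega> * cmod (Rm (u * Dl n j \<omega>)) \<partial>M))"
  proof (rule add_mono)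
    show "cmod (CLINT \<omega>|M. Y \<omega>) * \<bar>exp a * (1 - a) - 1\<bar> \<le> B * (a\<^sup>2 * B)"
    proof (rule mult_mono)
      show "\<bar>exp a * (1 - a) - 1\<bar> \<le> a\<^sup>2 * B"
        using exp_taylor_aux[OF a0] mult_left_mono[OF aB, of "a\<^sup>2"] by simp
    qed (use n1 Bpos in auto)
    show "exp a * cmod (CLINT \<omega>|M. Y \<omega> * Rm (u * Dl n j \<omega>)) \<le> B * (B * (\<integral>\<omega>. gi n K j \<omega> * cmod (Rm (u * Dl n j \<omega>)) \<partial>M))"
      using aB n2 Bpos by (intro mult_mono) auto
  qed
  finally show ?thesis unfolding a_def B_def by (simp add: power2_eq_square algebra_simps)
qed

end


context qv_setup0
begin

lemma bdd_int: fixes f :: "'a \<Rightarrow> 'b::{banach,second_countable_topology}"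
  shows "f \<in> borel_measurable M \<Longrightarrow> (\<And>x. x \<in> space M \<Longrightarrow> norm (f x) \<le> B) \<Longrightarrow> integrable M f"
  by (rule integrable_const_bound[where B=B]) (auto intro: AE_I2)

lemma EZ0: "0 < n \<Longrightarrow> (CLINT \<omega>|M. Z u n 0 \<omega>) = 1"
proof -
  assume n: "0 < n"
  have "(CLINT \<omega>|M. Z u n 0 \<omega>) = (CLINT \<omega>|M. 1)"
  proof (rule integral_cong_AE)
    show "Z u n 0 \<in> borel_measurable M" by measurable
    show "(\<lambda>\<omega>. 1::complex) \<in> borel_measurable M" by simp
    show "AE \<omega> in M. Z u n 0 \<omega> = 1"
      using X0 by eventually_elim (simp add: Z_def S_def tt_def q0)
  qed
  also have "\<dots> = 1" by (simp add: prob_space)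
  finally show ?thesis .
qed

lemma gi_abs: "\<bar>gi n K j \<omega>\<bar> \<le> 1" by (simp add: gi_def)
lemma gi_cM: "j \<le> n \<Longrightarrow> (\<lambda>\<omega>. complex_of_real (gi n K j \<omega>)) \<in> borel_measurable M"
  using gi_M by measurable
lemma gi_cM1: "j \<le> n \<Longrightarrow> (\<lambda>\<omega>. complex_of_real (1 - gi n K j \<omega>)) \<in> borel_measurable M"
  using gi_M by measurable

lemma gi_int: "j \<le> n \<Longrightarrow> integrable M (gi n K j)"
  by (rule bdd_int[where B=1]) (auto simp: gi_def)

lemma telescope:
  assumes "0 < n"
  shows "cmod ((CLINT \<omega>|M. Z u n n \<omega>) - 1 - (\<Sum>j<n. CLINT \<omega>|M. complex_of_real (gi n K j \<omega>) * (Z u n (Suc j) \<omega> - Z u n j \<omega>)))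
     \<le> 2 * exp (u\<^sup>2 * q t / 2) * (\<integral>\<omega>. 1 - gi n K n \<omega> \<partial>M)"
proof -
  define B where "B = exp (u\<^sup>2 * q t / 2)"
  define W where "W = (\<lambda>\<omega>. \<Sum>j<n. complex_of_real (1 - gi n K j \<omega>) * (Z u n (Suc j) \<omega> - Z u n j \<omega>))"
  have IZ: "\<And>j. j \<le> n \<Longrightarrow> integrable M (Z u n j)"
    by (rule bdd_int[where B=B]) (auto simp: B_def intro: Z_bound)
  have IG: "\<And>j. j < n \<Longrightarrow> integrable M (\<lambda>\<omega>. complex_of_real (gi n K j \<omega>) * (Z u n (Suc j) \<omega> - Z u n j \<omega>))"
  proof -
    fix j assume j: "j < n"
    show "integrable M (\<lambda>\<omega>. complex_of_real (gi n K j \<omega>) * (Z u n (Suc j) \<omega> - Z u n j \<omega>))"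
      by (rule int_bdd_multc[where B=1]) (use IZ[of j] IZ[of "Suc j"] j gi_cM[of j n K] in \<open>auto simp: gi_abs\<close>)
  qed
  have IW: "integrable M W"
  proof -
    have "\<And>j. j < n \<Longrightarrow> integrable M (\<lambda>\<omega>. complex_of_real (1 - gi n K j \<omega>) * (Z u n (Suc j) \<omega> - Z u n j \<omega>))"
    proof -
      fix j assume j: "j < n"
      show "integrable M (\<lambda>\<omega>. complex_of_real (1 - gi n K j \<omega>) * (Z u n (Suc j) \<omega> - Z u n j \<omega>))"
        by (rule int_bdd_multc[where B=1]) (use IZ[of j] IZ[of "Suc j"] j gi_cM1[of j n K] in \<open>auto simp: gi_def\<close>)
    qed
    then show ?thesis unfolding W_def by (intro Bochner_Integration.integrable_sum) auto
  qed
  have pw: "\<And>\<omega>. Z u n n \<omega> - Z u n 0 \<omega> = (\<Sum>j<n. complex_of_real (gi n K j \<omega>) * (Z u n (Suc j) \<omega> - Z u n j \<omega>)) + W \<omega>"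
  proof -
    fix \<omega>
    have "Z u n n \<omega> - Z u n 0 \<omega> = (\<Sum>j<n. Z u n (Suc j) \<omega> - Z u n j \<omega>)"
      by (rule sum_lessThan_telescope[symmetric])
    also have "\<dots> = (\<Sum>j<n. complex_of_real (gi n K j \<omega>) * (Z u n (Suc j) \<omega> - Z u n j \<omega>) + complex_of_real (1 - gi n K j \<omega>) * (Z u n (Suc j) \<omega> - Z u n j \<omega>))"
      by (intro sum.cong) (auto simp: algebra_simps)
    also have "\<dots> = (\<Sum>j<n. complex_of_real (gi n K j \<omega>) * (Z u n (Suc j) \<omega> - Z u n j \<omega>)) + W \<omega>"
      unfolding W_def by (simp add: sum.distrib)
    finally show "Z u n n \<omega> - Z u n 0 \<omega> = (\<Sum>j<n. complex_of_real (gi n K j \<omega>) * (Z u n (Suc j) \<omega> - Z u n j \<omega>)) + W \<omega>" .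
  qed
  have "(CLINT \<omega>|M. Z u n n \<omega>) - (CLINT \<omega>|M. Z u n 0 \<omega>) = (CLINT \<omega>|M. Z u n n \<omega> - Z u n 0 \<omega>)"
    using IZ[of n] IZ[of 0] by simp
  also have "\<dots> = (CLINT \<omega>|M. (\<Sum>j<n. complex_of_real (gi n K j \<omega>) * (Z u n (Suc j) \<omega> - Z u n j \<omega>)) + W \<omega>)"
    using pw by simp
  also have "\<dots> = (\<Sum>j<n. CLINT \<omega>|M. complex_of_real (gi n K j \<omega>) * (Z u n (Suc j) \<omega> - Z u n j \<omega>)) + (CLINT \<omega>|M. W \<omega>)"
  proof -
    have "(CLINT \<omega>|M. (\<Sum>j<n. complex_of_real (gi n K j \<omega>) * (Z u n (Suc j) \<omega> - Z u n j \<omega>)) + W \<omega>)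
       = (CLINT \<omega>|M. (\<Sum>j<n. complex_of_real (gi n K j \<omega>) * (Z u n (Suc j) \<omega> - Z u n j \<omega>))) + (CLINT \<omega>|M. W \<omega>)"
      by (rule Bochner_Integration.integral_add) (auto intro!: Bochner_Integration.integrable_sum IG IW)
    moreover have "(CLINT \<omega>|M. (\<Sum>j<n. complex_of_real (gi n K j \<omega>) * (Z u n (Suc j) \<omega> - Z u n j \<omega>)))
       = (\<Sum>j<n. CLINT \<omega>|M. complex_of_real (gi n K j \<omega>) * (Z u n (Suc j) \<omega> - Z u n j \<omega>))"
      by (rule Bochner_Integration.integral_sum) (auto intro: IG)
    ultimately show ?thesis by simp
  qed
  finally have eq: "(CLINT \<omega>|M. Z u n n \<omega>) - 1 - (\<Sum>j<n. CLINT \<omega>|M. complex_of_real (gi n K j \<omega>) * (Z u n (Suc j) \<omega> - Z u n j \<omega>)) = (CLINT \<omega>|M. W \<omega>)"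
    using EZ0[OF assms] by (simp add: algebra_simps)
  have Wb: "\<And>\<omega>. cmod (W \<omega>) \<le> 2 * B * (1 - gi n K n \<omega>)"
  proof -
    fix \<omega>
    let ?z = "\<lambda>j. Z u n (min j n) \<omega>"
    have "W \<omega> = (\<Sum>j<n. complex_of_real (1 - gi n K j \<omega>) * (?z (Suc j) - ?z j))"
      unfolding W_def by (intro sum.cong) auto
    also have "cmod \<dots> \<le> 2 * B * (1 - gi n K n \<omega>)"
      by (rule tele_aux) (auto simp: gi_mono gi_01 B_def intro: Z_bound)
    finally show "cmod (W \<omega>) \<le> 2 * B * (1 - gi n K n \<omega>)" .
  qed
  have "cmod (CLINT \<omega>|M. W \<omega>) \<le> (\<integral>\<omega>. cmod (W \<omega>) \<partial>M)" by (rule integral_norm_bound)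
  also have "\<dots> \<le> (\<integral>\<omega>. 2 * B * (1 - gi n K n \<omega>) \<partial>M)"
    using IW Wb gi_int[of n n K] by (intro integral_mono) auto
  also have "\<dots> = 2 * B * (\<integral>\<omega>. 1 - gi n K n \<omega> \<partial>M)" by simp
  finally show ?thesis using eq unfolding B_def by simp
qed

end


lemma sq_sum_expand:
  fixes a :: "nat \<Rightarrow> real"
  shows "(\<Sum>i<n. a i)\<^sup>2 = (\<Sum>i<n. a i * (a i + 2 * (\<Sum>j\<in>{i<..<n}. a j)))"
proof (induction n)
  case 0 then show ?case by simp
next
  case (Suc n)
  have split: "\<And>i. i < n \<Longrightarrow> {i<..<Suc n} = insert n {i<..<n}" by auto
  have "(\<Sum>i<Suc n. a i * (a i + 2 * (\<Sum>j\<in>{i<..<Suc n}. a j)))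
      = (\<Sum>i<n. a i * (a i + 2 * (\<Sum>j\<in>{i<..<Suc n}. a j))) + a n * a n"
  proof -
    have "{n<..<Suc n} = {}" by auto
    then show ?thesis by simp
  qed
  also have "(\<Sum>i<n. a i * (a i + 2 * (\<Sum>j\<in>{i<..<Suc n}. a j))) = (\<Sum>i<n. a i * (a i + 2 * (\<Sum>j\<in>{i<..<n}. a j)) + 2 * a i * a n)"
  proof (intro sum.cong refl)
    fix i assume "i \<in> {..<n}"
    then have "i < n" by simp
    then show "a i * (a i + 2 * (\<Sum>j\<in>{i<..<Suc n}. a j)) = a i * (a i + 2 * (\<Sum>j\<in>{i<..<n}. a j)) + 2 * a i * a n"
      by (simp add: split algebra_simps)
  qed
  also have "\<dots> = (\<Sum>i<n. a i)\<^sup>2 + 2 * (\<Sum>i<n. a i) * a n"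
    using Suc by (simp add: sum.distrib sum_distrib_right sum_distrib_left algebra_simps)
  finally show ?case by (simp add: power2_eq_square algebra_simps)
qed

context qv_setup0
begin

definition hD :: "nat \<Rightarrow> real \<Rightarrow> nat \<Rightarrow> 'a \<Rightarrow> real" where "hD n \<eta> j \<omega> = (if \<eta> < \<bar>Dl n j \<omega>\<bar> then 1 else 0)"
definition ee :: "nat \<Rightarrow> real \<Rightarrow> nat \<Rightarrow> 'a \<Rightarrow> real" where "ee n K j \<omega> = gi n K j \<omega> * (1 - gi n K (Suc j) \<omega>)"
definition aa :: "nat \<Rightarrow> real \<Rightarrow> nat \<Rightarrow> 'a \<Rightarrow> real" where "aa n K j \<omega> = gi n K (Suc j) \<omega> * (Dl n j \<omega>)\<^sup>2"
definition hA :: "nat \<Rightarrow> real \<Rightarrow> 'a \<Rightarrow> real" where "hA n \<eta> \<omega> = (if \<exists>j<n. \<eta> < \<bar>Dl n j \<omega>\<bar> then 1 else 0)"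

lemma G_Suc: "G n K (Suc j) \<omega> \<longleftrightarrow> G n K j \<omega> \<and> \<bar>S n (Suc j) \<omega>\<bar> \<le> K"
  unfolding G_def by (auto simp: atMost_Suc)

lemma gi_F': "i \<le> j \<Longrightarrow> j \<le> n \<Longrightarrow> gi n K i \<in> borel_measurable (F (tt n j))"
  using Fmeas_mono[OF tt_nonneg tt_mono tt_le gi_F] by auto

lemma Rm_pw:
  assumes "0 < \<eta>"
  shows "gi n K j \<omega> * cmod (Rm (u * Dl n j \<omega>))
    \<le> (\<bar>u\<bar>^3 * \<eta> / 6) * (gi n K j \<omega> * (Dl n j \<omega>)\<^sup>2) + u\<^sup>2 * (aa n K j \<omega> * hD n \<eta> j \<omega>)
       + 4 * u\<^sup>2 * (ee n K j \<omega> * (S n (Suc j) \<omega>)\<^sup>2)"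
proof -
  let ?D = "Dl n j \<omega>"
  have nn: "0 \<le> (\<bar>u\<bar>^3 * \<eta> / 6) * (gi n K j \<omega> * ?D\<^sup>2)" "0 \<le> u\<^sup>2 * (aa n K j \<omega> * hD n \<eta> j \<omega>)"
     "0 \<le> 4 * u\<^sup>2 * (ee n K j \<omega> * (S n (Suc j) \<omega>)\<^sup>2)"
    using assms by (auto simp: gi_def aa_def hD_def ee_def)
  show ?thesis
  proof (cases "G n K j \<omega>")
    case False
    then show ?thesis using nn by (simp add: gi_def)
  next
    case Gj: True
    show ?thesis
    proof (cases "\<bar>?D\<bar> \<le> \<eta>")
      case True
      have "cmod (Rm (u * ?D)) \<le> \<bar>u * ?D\<bar>^3 / 6" by (rule Rm_bound3)
      also have "\<bar>u * ?D\<bar>^3 = \<bar>u\<bar>^3 * (\<bar>?D\<bar> * ?D\<^sup>2)"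
      proof -
        have "\<bar>u * ?D\<bar>^3 = \<bar>u\<bar>^3 * \<bar>?D\<bar>^3" by (simp add: abs_mult power_mult_distrib)
        moreover have "\<bar>?D\<bar>^3 = \<bar>?D\<bar> * ?D\<^sup>2" by (simp add: power3_eq_cube power2_eq_square abs_mult_self_eq)
        ultimately show ?thesis by simp
      qed
      also have "\<bar>u\<bar>^3 * (\<bar>?D\<bar> * ?D\<^sup>2) \<le> \<bar>u\<bar>^3 * (\<eta> * ?D\<^sup>2)"
        using True by (intro mult_left_mono mult_right_mono) auto
      finally have "cmod (Rm (u * ?D)) \<le> (\<bar>u\<bar>^3 * \<eta> / 6) * ?D\<^sup>2" by simp
      then show ?thesis using Gj nn by (simp add: gi_def)
    next
      case False
      have r2: "cmod (Rm (u * ?D)) \<le> u\<^sup>2 * ?D\<^sup>2" using Rm_bound2[of "u * ?D"] by (simp add: power_mult_distrib)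
      show ?thesis
      proof (cases "G n K (Suc j) \<omega>")
        case True
        then have e: "u\<^sup>2 * (aa n K j \<omega> * hD n \<eta> j \<omega>) = u\<^sup>2 * ?D\<^sup>2" using False by (simp add: aa_def hD_def gi_def)
        have "gi n K j \<omega> * cmod (Rm (u * ?D)) = cmod (Rm (u * ?D))" using Gj by (simp add: gi_def)
        then show ?thesis using r2 nn e by linarith
      next
        case notG: False
        have sj: "\<bar>S n j \<omega>\<bar> \<le> K" using Gj by (simp add: G_def)
        have sj1: "K < \<bar>S n (Suc j) \<omega>\<bar>" using Gj notG G_Suc by auto
        have "\<bar>?D\<bar> \<le> 2 * \<bar>S n (Suc j) \<omega>\<bar>" using sj sj1 unfolding Dl_def by linarith
        then have "\<bar>?D\<bar> \<le> \<bar>2 * S n (Suc j) \<omega>\<bar>" by (simp add: abs_mult)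
        then have "?D\<^sup>2 \<le> (2 * S n (Suc j) \<omega>)\<^sup>2" using abs_le_square_iff by blast
        then have "?D\<^sup>2 \<le> 4 * (S n (Suc j) \<omega>)\<^sup>2" by (simp add: power_mult_distrib)
        then have "u\<^sup>2 * ?D\<^sup>2 \<le> u\<^sup>2 * (4 * (S n (Suc j) \<omega>)\<^sup>2)" by (intro mult_left_mono) auto
        moreover have "ee n K j \<omega> = 1" using Gj notG by (simp add: ee_def gi_def)
        ultimately show ?thesis using Gj r2 nn by (simp add: gi_def algebra_simps)
      qed
    qed
  qed
qed

lemma T1_step:
  assumes "j < n"
  shows "(\<integral>\<omega>. gi n K j \<omega> * (Dl n j \<omega>)\<^sup>2 \<partial>M) = dq n j * (\<integral>\<omega>. gi n K j \<omega> \<partial>M)"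
proof -
  have s: "0 \<le> tt n j" "tt n j \<le> tt n (Suc j)" "tt n (Suc j) \<le> t"
    using tt_nonneg tt_mono[of j "Suc j" n] tt_le[of "Suc j" n] assms by auto
  show ?thesis using incr2[OF s gi_F[of j n K], of 1] assms gi_abs
    unfolding Dl_def S_def dq_def by auto
qed

lemma gi_exp_le1: "j \<le> n \<Longrightarrow> (\<integral>\<omega>. gi n K j \<omega> \<partial>M) \<le> 1"
proof -
  assume "j \<le> n"
  then have "(\<integral>\<omega>. gi n K j \<omega> \<partial>M) \<le> (\<integral>\<omega>. 1 \<partial>M)"
    using gi_int gi_le1 by (intro integral_mono) auto
  then show ?thesis by (simp add: prob_space)
qed

lemma gi_exp_nonneg: "0 \<le> (\<integral>\<omega>. gi n K j \<omega> \<partial>M)"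
  using gi_nonneg by (simp add: integral_nonneg)

lemma T1_step_le: "j < n \<Longrightarrow> (\<integral>\<omega>. gi n K j \<omega> * (Dl n j \<omega>)\<^sup>2 \<partial>M) \<le> dq n j"
  using T1_step[of j n K] dq_nonneg[of j n] gi_exp_le1[of j n K]
  by (simp add: mult_left_le)

lemma sum_dq: "0 < n \<Longrightarrow> (\<Sum>j<n. dq n j) = q t"
  unfolding dq_def using sum_lessThan_telescope[of "\<lambda>j. q (tt n j)" n] tt_n[of n] q0
  by (simp add: tt_def)

lemma ee_telescope: "(\<Sum>j<m. ee n K j \<omega>) = gi n K 0 \<omega> - gi n K m \<omega>"
proof -
  have "\<And>j. ee n K j \<omega> = gi n K j \<omega> - gi n K (Suc j) \<omega>"
    unfolding ee_def by (auto simp: gi_def G_Suc)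
  then show ?thesis using sum_lessThan_telescope'[of "\<lambda>j. gi n K j \<omega>" m] by simp
qed

lemma ee_F: "j < n \<Longrightarrow> ee n K j \<in> borel_measurable (F (tt n (Suc j)))"
proof -
  assume a: "j < n"
  have [measurable]: "gi n K j \<in> borel_measurable (F (tt n (Suc j)))" using gi_F'[of j "Suc j" n K] a by auto
  have [measurable]: "gi n K (Suc j) \<in> borel_measurable (F (tt n (Suc j)))" using gi_F[of "Suc j" n K] a by auto
  show ?thesis unfolding ee_def[abs_def] by measurable
qed

lemma ee_01: "0 \<le> ee n K j \<omega> \<and> ee n K j \<omega> \<le> 1"
  by (auto simp: ee_def gi_def)

lemma T3_step:
  assumes "j < n"
  shows "(\<integral>\<omega>. ee n K j \<omega> * (S n (Suc j) \<omega>)\<^sup>2 \<partial>M) \<le> (\<integral>\<omega>. ee n K j \<omega> * (X t \<omega>)\<^sup>2 \<partial>M)"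
proof -
  let ?s = "tt n (Suc j)"
  have s: "0 \<le> ?s" "?s \<le> t" "t \<le> t" using tt_nonneg tt_le[of "Suc j" n] assms by auto
  have eF: "ee n K j \<in> borel_measurable (F ?s)" by (rule ee_F[OF assms])
  have eM: "ee n K j \<in> borel_measurable M" using Fmeas[OF s(1,2) eF] .
  have eb: "\<And>x. \<bar>ee n K j x\<bar> \<le> 1" using ee_01 by (simp add: abs_le_iff)
  have tt: "0 \<le> t" "t \<le> t" using t_nonneg by auto
  have i1: "integrable M (\<lambda>\<omega>. ee n K j \<omega> * (X t \<omega>)\<^sup>2)" by (rule int_bdd_mult[OF sqint[OF tt] eM]) (use eb in auto)
  have i2: "integrable M (\<lambda>\<omega>. ee n K j \<omega> * (X ?s \<omega>)\<^sup>2)" by (rule int_bdd_mult[OF sqint[OF s(1,2)] eM]) (use eb in auto)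
  have ie: "integrable M (ee n K j)" by (rule bdd_int[where B=1]) (use eM eb in auto)
  have "(\<integral>\<omega>. ee n K j \<omega> * ((X t \<omega>)\<^sup>2 - q t) \<partial>M) = (\<integral>\<omega>. ee n K j \<omega> * ((X ?s \<omega>)\<^sup>2 - q ?s) \<partial>M)"
    using test2[OF s eF, of 1] eb by auto
  then have "(\<integral>\<omega>. ee n K j \<omega> * (X t \<omega>)\<^sup>2 \<partial>M) - q t * (\<integral>\<omega>. ee n K j \<omega> \<partial>M)
     = (\<integral>\<omega>. ee n K j \<omega> * (X ?s \<omega>)\<^sup>2 \<partial>M) - q ?s * (\<integral>\<omega>. ee n K j \<omega> \<partial>M)"
    using i1 i2 ie by (simp add: right_diff_distrib ac_simps)
  moreover have "q ?s * (\<integral>\<omega>. ee n K j \<omega> \<partial>M) \<le> q t * (\<integral>\<omega>. ee n K j \<omega> \<partial>M)"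
    using qmono[OF s] ee_01 by (intro mult_right_mono) (auto intro: integral_nonneg)
  ultimately show ?thesis unfolding S_def by linarith
qed

end


context qv_setup0
begin

definition U :: "nat \<Rightarrow> real \<Rightarrow> 'a \<Rightarrow> real" where "U n K \<omega> = (\<Sum>j<n. aa n K j \<omega>)"

lemma aa_nonneg: "0 \<le> aa n K j \<omega>" by (simp add: aa_def gi_def)

lemma aa_le: "aa n K j \<omega> \<le> 4 * K\<^sup>2"
proof (cases "G n K (Suc j) \<omega>")
  case True
  then have a: "\<bar>S n j \<omega>\<bar> \<le> K" "\<bar>S n (Suc j) \<omega>\<bar> \<le> K" by (auto simp: G_def)
  then have "\<bar>Dl n j \<omega>\<bar> \<le> \<bar>2 * K\<bar>" unfolding Dl_def by linarith
  then have "(Dl n j \<omega>)\<^sup>2 \<le> (2 * K)\<^sup>2" using abs_le_square_iff by blast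
  then show ?thesis using True by (simp add: aa_def gi_def power_mult_distrib)
next
  case False then show ?thesis by (simp add: aa_def gi_def)
qed

lemma aa_le_gi: "aa n K j \<omega> \<le> gi n K j \<omega> * (Dl n j \<omega>)\<^sup>2"
  by (auto simp: aa_def gi_def G_Suc)

lemma aa_F: "i < j \<Longrightarrow> j \<le> n \<Longrightarrow> aa n K i \<in> borel_measurable (F (tt n j))"
proof -
  assume a: "i < j" "j \<le> n"
  have [measurable]: "gi n K (Suc i) \<in> borel_measurable (F (tt n j))" using gi_F'[of "Suc i" j n K] a by auto
  have [measurable]: "S n i \<in> borel_measurable (F (tt n j))" using S_F[of i j n] a by auto
  have [measurable]: "S n (Suc i) \<in> borel_measurable (F (tt n j))" using S_F[of "Suc i" j n] a by auto
  show ?thesis unfolding aa_def[abs_def] Dl_def[abs_def] by measurable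
qed

lemma aa_M[measurable]: "i < n \<Longrightarrow> aa n K i \<in> borel_measurable M"
  using Fmeas[OF tt_nonneg tt_le aa_F[of i "Suc i" n K]] by auto

lemma aa_int: "i < n \<Longrightarrow> integrable M (aa n K i)"
  by (rule bdd_int[where B="4 * K\<^sup>2"]) (use aa_nonneg aa_le in auto)

lemma aa_exp: "i < n \<Longrightarrow> (\<integral>\<omega>. aa n K i \<omega> \<partial>M) \<le> dq n i"
proof -
  assume a: "i < n"
  have "(\<integral>\<omega>. aa n K i \<omega> \<partial>M) \<le> (\<integral>\<omega>. gi n K i \<omega> * (Dl n i \<omega>)\<^sup>2 \<partial>M)"
  proof (rule integral_mono)
    show "integrable M (aa n K i)" using aa_int[OF a] .
    show "integrable M (\<lambda>\<omega>. gi n K i \<omega> * (Dl n i \<omega>)\<^sup>2)"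
      by (rule int_bdd_mult[OF Dl2_int[OF a] gi_M]) (use a gi_abs in auto)
  qed (rule aa_le_gi)
  also have "\<dots> \<le> dq n i" by (rule T1_step_le[OF a])
  finally show ?thesis .
qed

lemma cross:
  assumes "i < j" "j < n"
  shows "(\<integral>\<omega>. aa n K i \<omega> * (gi n K j \<omega> * (Dl n j \<omega>)\<^sup>2) \<partial>M) \<le> dq n j * (\<integral>\<omega>. aa n K i \<omega> \<partial>M)"
proof -
  have s: "0 \<le> tt n j" "tt n j \<le> tt n (Suc j)" "tt n (Suc j) \<le> t"
    using tt_nonneg tt_mono[of j "Suc j" n] tt_le[of "Suc j" n] assms by auto
  have YF: "(\<lambda>\<omega>. aa n K i \<omega> * gi n K j \<omega>) \<in> borel_measurable (F (tt n j))"
  proof -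
    have m1: "aa n K i \<in> borel_measurable (F (tt n j))" using aa_F assms by auto
    have m2: "gi n K j \<in> borel_measurable (F (tt n j))" using gi_F assms by auto
    show ?thesis using m1 m2 by measurable
  qed
  have Yb: "\<And>x. \<bar>aa n K i x * gi n K j x\<bar> \<le> 4 * K\<^sup>2"
  proof -
    fix x
    have "\<bar>aa n K i x * gi n K j x\<bar> = aa n K i x * gi n K j x" using aa_nonneg gi_nonneg by simp
    also have "\<dots> \<le> aa n K i x * 1" using aa_nonneg gi_le1 by (intro mult_left_mono) auto
    finally show "\<bar>aa n K i x * gi n K j x\<bar> \<le> 4 * K\<^sup>2" using aa_le[of n K i x] by simp
  qed
  have "(\<integral>\<omega>. aa n K i \<omega> * gi n K j \<omega> * (X (tt n (Suc j)) \<omega> - X (tt n j) \<omega>)\<^sup>2 \<partial>M)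
       = (q (tt n (Suc j)) - q (tt n j)) * (\<integral>\<omega>. aa n K i \<omega> * gi n K j \<omega> \<partial>M)"
    by (rule incr2[OF s YF]) (use Yb in auto)
  then have eq: "(\<integral>\<omega>. aa n K i \<omega> * (gi n K j \<omega> * (Dl n j \<omega>)\<^sup>2) \<partial>M) = dq n j * (\<integral>\<omega>. aa n K i \<omega> * gi n K j \<omega> \<partial>M)"
    unfolding Dl_def S_def dq_def by (simp add: ac_simps)
  have "(\<integral>\<omega>. aa n K i \<omega> * gi n K j \<omega> \<partial>M) \<le> (\<integral>\<omega>. aa n K i \<omega> \<partial>M)"
  proof (rule integral_mono)
    show "integrable M (\<lambda>\<omega>. aa n K i \<omega> * gi n K j \<omega>)"
      by (rule bdd_int[where B="4 * K\<^sup>2"]) (use Yb assms in auto)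
    show "integrable M (aa n K i)" using aa_int assms by auto
    fix x show "aa n K i x * gi n K j x \<le> aa n K i x" using aa_nonneg gi_le1 mult_left_le by blast
  qed
  then have "dq n j * (\<integral>\<omega>. aa n K i \<omega> * gi n K j \<omega> \<partial>M) \<le> dq n j * (\<integral>\<omega>. aa n K i \<omega> \<partial>M)"
    using dq_nonneg[OF assms(2)] by (intro mult_left_mono) auto
  then show ?thesis using eq by simp
qed

lemma U_M[measurable]: "U n K \<in> borel_measurable M"
  unfolding U_def[abs_def] by measurable

lemma U_nonneg: "0 \<le> U n K \<omega>" unfolding U_def by (intro sum_nonneg) (simp add: aa_nonneg)

lemma U_le: "U n K \<omega> \<le> real n * (4 * K\<^sup>2)"
proof -
  have "U n K \<omega> \<le> (\<Sum>j<n. 4 * K\<^sup>2)" unfolding U_def by (intro sum_mono) (rule aa_le)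
  then show ?thesis by simp
qed

lemma U2_int: "integrable M (\<lambda>\<omega>. (U n K \<omega>)\<^sup>2)"
proof (rule bdd_int[where B="(real n * (4 * K\<^sup>2))\<^sup>2"])
  show "(\<lambda>\<omega>. (U n K \<omega>)\<^sup>2) \<in> borel_measurable M" by measurable
  fix x
  have "(U n K x)\<^sup>2 \<le> (real n * (4 * K\<^sup>2))\<^sup>2" using U_nonneg U_le by (intro power_mono) auto
  then show "norm ((U n K x)\<^sup>2) \<le> (real n * (4 * K\<^sup>2))\<^sup>2" by simp
qed

lemma U2_exp:
  assumes "0 < n"
  shows "(\<integral>\<omega>. (U n K \<omega>)\<^sup>2 \<partial>M) \<le> (4 * K\<^sup>2 + 2 * q t) * q t"
proof -
  define V where "V = (\<lambda>i \<omega>. 4 * K\<^sup>2 * aa n K i \<omega> + 2 * (\<Sum>j\<in>{i<..<n}. aa n K i \<omega> * (gi n K j \<omega> * (Dl n j \<omega>)\<^sup>2)))"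
  have VI: "\<And>i. i < n \<Longrightarrow> integrable M (V i)"
  proof -
    fix i assume i: "i < n"
    have "\<And>j. j \<in> {i<..<n} \<Longrightarrow> integrable M (\<lambda>\<omega>. aa n K i \<omega> * (gi n K j \<omega> * (Dl n j \<omega>)\<^sup>2))"
    proof -
      fix j assume j: "j \<in> {i<..<n}"
      have "integrable M (\<lambda>\<omega>. gi n K j \<omega> * (Dl n j \<omega>)\<^sup>2)"
        by (rule int_bdd_mult[OF Dl2_int gi_M]) (use j gi_abs in auto)
      then show "integrable M (\<lambda>\<omega>. aa n K i \<omega> * (gi n K j \<omega> * (Dl n j \<omega>)\<^sup>2))"
        by (rule int_bdd_mult[where B="4 * K\<^sup>2"]) (use i aa_nonneg aa_le in auto)
    qed
    then show "integrable M (V i)" unfolding V_def using aa_int[OF i]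
      by (intro Bochner_Integration.integrable_add Bochner_Integration.integrable_mult_right Bochner_Integration.integrable_sum) auto
  qed
  have pw: "\<And>\<omega>. (U n K \<omega>)\<^sup>2 \<le> (\<Sum>i<n. V i \<omega>)"
  proof -
    fix \<omega>
    have "(U n K \<omega>)\<^sup>2 = (\<Sum>i<n. aa n K i \<omega> * (aa n K i \<omega> + 2 * (\<Sum>j\<in>{i<..<n}. aa n K j \<omega>)))"
      unfolding U_def by (rule sq_sum_expand)
    also have "\<dots> \<le> (\<Sum>i<n. V i \<omega>)"
    proof (rule sum_mono)
      fix i assume "i \<in> {..<n}"
      have "aa n K i \<omega> + 2 * (\<Sum>j\<in>{i<..<n}. aa n K j \<omega>) \<le> 4 * K\<^sup>2 + 2 * (\<Sum>j\<in>{i<..<n}. gi n K j \<omega> * (Dl n j \<omega>)\<^sup>2)"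
        using aa_le[of n K i \<omega>] sum_mono[of "{i<..<n}" "\<lambda>j. aa n K j \<omega>" "\<lambda>j. gi n K j \<omega> * (Dl n j \<omega>)\<^sup>2"] aa_le_gi
        by fastforce
      then have "aa n K i \<omega> * (aa n K i \<omega> + 2 * (\<Sum>j\<in>{i<..<n}. aa n K j \<omega>))
          \<le> aa n K i \<omega> * (4 * K\<^sup>2 + 2 * (\<Sum>j\<in>{i<..<n}. gi n K j \<omega> * (Dl n j \<omega>)\<^sup>2))"
        using aa_nonneg by (intro mult_left_mono) auto
      also have "\<dots> = V i \<omega>" unfolding V_def by (simp add: algebra_simps sum_distrib_left)
      finally show "aa n K i \<omega> * (aa n K i \<omega> + 2 * (\<Sum>j\<in>{i<..<n}. aa n K j \<omega>)) \<le> V i \<omega>" .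
    qed
    finally show "(U n K \<omega>)\<^sup>2 \<le> (\<Sum>i<n. V i \<omega>)" .
  qed
  have "(\<integral>\<omega>. (U n K \<omega>)\<^sup>2 \<partial>M) \<le> (\<integral>\<omega>. (\<Sum>i<n. V i \<omega>) \<partial>M)"
    using U2_int VI pw by (intro integral_mono Bochner_Integration.integrable_sum) auto
  also have "\<dots> = (\<Sum>i<n. \<integral>\<omega>. V i \<omega> \<partial>M)"
    by (rule Bochner_Integration.integral_sum) (use VI in auto)
  also have "\<dots> \<le> (\<Sum>i<n. (4 * K\<^sup>2 + 2 * q t) * dq n i)"
  proof (rule sum_mono)
    fix i assume "i \<in> {..<n}"
    then have i: "i < n" by simp
    have IJ: "\<And>j. j \<in> {i<..<n} \<Longrightarrow> integrable M (\<lambda>\<omega>. aa n K i \<omega> * (gi n K j \<omega> * (Dl n j \<omega>)\<^sup>2))"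
    proof -
      fix j assume j: "j \<in> {i<..<n}"
      have "integrable M (\<lambda>\<omega>. gi n K j \<omega> * (Dl n j \<omega>)\<^sup>2)"
        by (rule int_bdd_mult[OF Dl2_int gi_M]) (use j gi_abs in auto)
      then show "integrable M (\<lambda>\<omega>. aa n K i \<omega> * (gi n K j \<omega> * (Dl n j \<omega>)\<^sup>2))"
        by (rule int_bdd_mult[where B="4 * K\<^sup>2"]) (use i aa_nonneg aa_le in auto)
    qed
    have "(\<integral>\<omega>. V i \<omega> \<partial>M) = 4 * K\<^sup>2 * (\<integral>\<omega>. aa n K i \<omega> \<partial>M) + 2 * (\<Sum>j\<in>{i<..<n}. \<integral>\<omega>. aa n K i \<omega> * (gi n K j \<omega> * (Dl n j \<omega>)\<^sup>2) \<partial>M)"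
    proof -
      have s1: "(\<integral>\<omega>. (\<Sum>j\<in>{i<..<n}. aa n K i \<omega> * (gi n K j \<omega> * (Dl n j \<omega>)\<^sup>2)) \<partial>M)
          = (\<Sum>j\<in>{i<..<n}. \<integral>\<omega>. aa n K i \<omega> * (gi n K j \<omega> * (Dl n j \<omega>)\<^sup>2) \<partial>M)"
        by (rule Bochner_Integration.integral_sum) (rule IJ)
      have "(\<integral>\<omega>. V i \<omega> \<partial>M) = (\<integral>\<omega>. 4 * K\<^sup>2 * aa n K i \<omega> \<partial>M) + (\<integral>\<omega>. 2 * (\<Sum>j\<in>{i<..<n}. aa n K i \<omega> * (gi n K j \<omega> * (Dl n j \<omega>)\<^sup>2)) \<partial>M)"
        unfolding V_def
        by (rule Bochner_Integration.integral_add) (use aa_int[OF i] IJ in \<open>auto intro!: Bochner_Integration.integrable_sum\<close>)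
      then show ?thesis using s1 by simp
    qed
    also have "\<dots> \<le> 4 * K\<^sup>2 * (\<integral>\<omega>. aa n K i \<omega> \<partial>M) + 2 * (\<Sum>j\<in>{i<..<n}. dq n j * (\<integral>\<omega>. aa n K i \<omega> \<partial>M))"
      using cross[of i _ n K] by (intro add_left_mono mult_left_mono sum_mono) auto
    also have "(\<Sum>j\<in>{i<..<n}. dq n j * (\<integral>\<omega>. aa n K i \<omega> \<partial>M)) = (\<Sum>j\<in>{i<..<n}. dq n j) * (\<integral>\<omega>. aa n K i \<omega> \<partial>M)"
      by (simp add: sum_distrib_right)
    also have "(\<Sum>j\<in>{i<..<n}. dq n j) \<le> q t"
    proof -
      have "(\<Sum>j\<in>{i<..<n}. dq n j) \<le> (\<Sum>j<n. dq n j)"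
        by (rule sum_mono2) (auto intro: dq_nonneg)
      then show ?thesis using sum_dq[OF assms] by simp
    qed
    then have "4 * K\<^sup>2 * (\<integral>\<omega>. aa n K i \<omega> \<partial>M) + 2 * ((\<Sum>j\<in>{i<..<n}. dq n j) * (\<integral>\<omega>. aa n K i \<omega> \<partial>M))
        \<le> 4 * K\<^sup>2 * (\<integral>\<omega>. aa n K i \<omega> \<partial>M) + 2 * (q t * (\<integral>\<omega>. aa n K i \<omega> \<partial>M))"
      using aa_nonneg by (intro add_left_mono mult_left_mono mult_right_mono integral_nonneg) auto
    also have "\<dots> = (4 * K\<^sup>2 + 2 * q t) * (\<integral>\<omega>. aa n K i \<omega> \<partial>M)" by (simp add: algebra_simps)
    also have "\<dots> \<le> (4 * K\<^sup>2 + 2 * q t) * dq n i"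
      using aa_exp[OF i] q_nonneg[of t] t_nonneg by (intro mult_left_mono) auto
    finally show "(\<integral>\<omega>. V i \<omega> \<partial>M) \<le> (4 * K\<^sup>2 + 2 * q t) * dq n i" .
  qed
  also have "\<dots> = (4 * K\<^sup>2 + 2 * q t) * q t" using sum_dq[OF assms] by (simp add: sum_distrib_left[symmetric])
  finally show ?thesis .
qed

end


context qv_setup0
begin

lemma hD_M[measurable]: "j < n \<Longrightarrow> hD n \<eta> j \<in> borel_measurable M"
  unfolding hD_def[abs_def] by measurable

lemma hA_M[measurable]: "hA n \<eta> \<in> borel_measurable M"
proof -
  have [measurable]: "\<And>j. j \<in> {..<n} \<Longrightarrow> Dl n j \<in> borel_measurable M" by auto
  have "(\<lambda>\<omega>. if \<exists>j\<in>{..<n}. \<eta> < \<bar>Dl n j \<omega>\<bar> then 1 else 0::real) \<in> borel_measurable M" by measurable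
  moreover have "(\<lambda>\<omega>. if \<exists>j\<in>{..<n}. \<eta> < \<bar>Dl n j \<omega>\<bar> then 1 else 0::real) = hA n \<eta>"
    unfolding hA_def[abs_def] lessThan_iff Bex_def by (rule refl)
  ultimately show ?thesis by simp
qed

lemma hA_01: "0 \<le> hA n \<eta> \<omega> \<and> hA n \<eta> \<omega> \<le> 1" by (simp add: hA_def)

lemma T2_pw:
  assumes "0 < lam"
  shows "(\<Sum>j<n. aa n K j \<omega> * hD n \<eta> j \<omega>) \<le> lam * hA n \<eta> \<omega> + (U n K \<omega>)\<^sup>2 / lam"
proof (cases "\<exists>j<n. \<eta> < \<bar>Dl n j \<omega>\<bar>")
  case False
  then have "\<And>j. j < n \<Longrightarrow> hD n \<eta> j \<omega> = 0" by (auto simp: hD_def)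
  then have "(\<Sum>j<n. aa n K j \<omega> * hD n \<eta> j \<omega>) = 0" by simp
  then show ?thesis using assms False by (simp add: hA_def)
next
  case True
  have "(\<Sum>j<n. aa n K j \<omega> * hD n \<eta> j \<omega>) \<le> U n K \<omega>"
    unfolding U_def by (intro sum_mono) (auto simp: hD_def aa_nonneg)
  moreover have "U n K \<omega> \<le> lam + (U n K \<omega>)\<^sup>2 / lam"
  proof -
    have h1: "2 * U n K \<omega> * lam \<le> (U n K \<omega>)\<^sup>2 + lam\<^sup>2" by (rule sum_squares_bound)
    have h2: "0 \<le> U n K \<omega> * lam" using U_nonneg[of n K \<omega>] assms by simp
    have "U n K \<omega> * lam \<le> lam\<^sup>2 + (U n K \<omega>)\<^sup>2" using h1 h2 by linarith
    then show ?thesis using assms by (simp add: field_simps power2_eq_square)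
  qed
  ultimately show ?thesis using True by (simp add: hA_def)
qed

lemma sum_Rm_bound:
  assumes n: "0 < n" and eta: "0 < \<eta>" and lam: "0 < lam"
  shows "(\<Sum>j<n. \<integral>\<omega>. gi n K j \<omega> * cmod (Rm (u * Dl n j \<omega>)) \<partial>M)
    \<le> (\<bar>u\<bar>^3 * \<eta> / 6) * q t + u\<^sup>2 * (lam * (\<integral>\<omega>. hA n \<eta> \<omega> \<partial>M) + (4 * K\<^sup>2 + 2 * q t) * q t / lam)
      + 4 * u\<^sup>2 * (\<integral>\<omega>. (1 - gi n K n \<omega>) * (X t \<omega>)\<^sup>2 \<partial>M)"
proof -
  define c1 where "c1 = \<bar>u\<bar>^3 * \<eta> / 6"
  have tt: "0 \<le> t" "t \<le> t" using t_nonneg by auto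
  have IgD: "\<And>j. j < n \<Longrightarrow> integrable M (\<lambda>\<omega>. gi n K j \<omega> * (Dl n j \<omega>)\<^sup>2)"
    by (rule int_bdd_mult[OF Dl2_int gi_M]) (use gi_abs in auto)
  have IaD: "\<And>j. j < n \<Longrightarrow> integrable M (\<lambda>\<omega>. aa n K j \<omega> * hD n \<eta> j \<omega>)"
    by (rule bdd_int[where B="4 * K\<^sup>2"]) (auto simp: hD_def aa_nonneg aa_le)
  have IeS: "\<And>j. j < n \<Longrightarrow> integrable M (\<lambda>\<omega>. ee n K j \<omega> * (S n (Suc j) \<omega>)\<^sup>2)"
  proof -
    fix j assume j: "j < n"
    have s: "0 \<le> tt n (Suc j)" "tt n (Suc j) \<le> t" using tt_nonneg tt_le[of "Suc j" n] j by auto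
    have eM: "ee n K j \<in> borel_measurable M" using Fmeas[OF s ee_F[OF j]] .
    show "integrable M (\<lambda>\<omega>. ee n K j \<omega> * (S n (Suc j) \<omega>)\<^sup>2)"
      unfolding S_def by (rule int_bdd_mult[OF sqint[OF s] eM, where B=1]) (use ee_01 in \<open>auto simp: abs_le_iff\<close>)
  qed
  have IeX: "\<And>j. j < n \<Longrightarrow> integrable M (\<lambda>\<omega>. ee n K j \<omega> * (X t \<omega>)\<^sup>2)"
  proof -
    fix j assume j: "j < n"
    have s: "0 \<le> tt n (Suc j)" "tt n (Suc j) \<le> t" using tt_nonneg tt_le[of "Suc j" n] j by auto
    have eM: "ee n K j \<in> borel_measurable M" using Fmeas[OF s ee_F[OF j]] .
    show "integrable M (\<lambda>\<omega>. ee n K j \<omega> * (X t \<omega>)\<^sup>2)"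
      by (rule int_bdd_mult[OF sqint[OF tt] eM, where B=1]) (use ee_01 in \<open>auto simp: abs_le_iff\<close>)
  qed
  have IR: "\<And>j. j < n \<Longrightarrow> integrable M (\<lambda>\<omega>. gi n K j \<omega> * cmod (Rm (u * Dl n j \<omega>)))"
    by (rule int_bdd_mult[where B=1]) (use Rm_int gi_M gi_abs in auto)
  have step: "\<And>j. j < n \<Longrightarrow> (\<integral>\<omega>. gi n K j \<omega> * cmod (Rm (u * Dl n j \<omega>)) \<partial>M)
     \<le> c1 * (\<integral>\<omega>. gi n K j \<omega> * (Dl n j \<omega>)\<^sup>2 \<partial>M) + u\<^sup>2 * (\<integral>\<omega>. aa n K j \<omega> * hD n \<eta> j \<omega> \<partial>M)
       + 4 * u\<^sup>2 * (\<integral>\<omega>. ee n K j \<omega> * (S n (Suc j) \<omega>)\<^sup>2 \<partial>M)"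
  proof -
    fix j assume j: "j < n"
    have "(\<integral>\<omega>. gi n K j \<omega> * cmod (Rm (u * Dl n j \<omega>)) \<partial>M)
      \<le> (\<integral>\<omega>. c1 * (gi n K j \<omega> * (Dl n j \<omega>)\<^sup>2) + u\<^sup>2 * (aa n K j \<omega> * hD n \<eta> j \<omega>)
       + 4 * u\<^sup>2 * (ee n K j \<omega> * (S n (Suc j) \<omega>)\<^sup>2) \<partial>M)"
      using IR[OF j] IgD[OF j] IaD[OF j] IeS[OF j] Rm_pw[OF eta] unfolding c1_def
      by (intro integral_mono) auto
    also have "\<dots> = c1 * (\<integral>\<omega>. gi n K j \<omega> * (Dl n j \<omega>)\<^sup>2 \<partial>M) + u\<^sup>2 * (\<integral>\<omega>. aa n K j \<omega> * hD n \<eta> j \<omega> \<partial>M)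
       + 4 * u\<^sup>2 * (\<integral>\<omega>. ee n K j \<omega> * (S n (Suc j) \<omega>)\<^sup>2 \<partial>M)"
      using IgD[OF j] IaD[OF j] IeS[OF j] by simp
    finally show "?thesis j" .
  qed
  have A: "(\<Sum>j<n. c1 * (\<integral>\<omega>. gi n K j \<omega> * (Dl n j \<omega>)\<^sup>2 \<partial>M)) \<le> c1 * q t"
  proof -
    have "(\<Sum>j<n. c1 * (\<integral>\<omega>. gi n K j \<omega> * (Dl n j \<omega>)\<^sup>2 \<partial>M)) \<le> (\<Sum>j<n. c1 * dq n j)"
      using T1_step_le eta by (intro sum_mono mult_left_mono) (auto simp: c1_def)
    also have "\<dots> = c1 * q t" using sum_dq[OF n] by (simp add: sum_distrib_left[symmetric])
    finally show ?thesis .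
  qed
  have B: "(\<Sum>j<n. u\<^sup>2 * (\<integral>\<omega>. aa n K j \<omega> * hD n \<eta> j \<omega> \<partial>M)) \<le> u\<^sup>2 * (lam * (\<integral>\<omega>. hA n \<eta> \<omega> \<partial>M) + (4 * K\<^sup>2 + 2 * q t) * q t / lam)"
  proof -
    have hAI: "integrable M (hA n \<eta>)" by (rule bdd_int[where B=1]) (auto simp: hA_def)
    have "(\<Sum>j<n. (\<integral>\<omega>. aa n K j \<omega> * hD n \<eta> j \<omega> \<partial>M)) = (\<integral>\<omega>. (\<Sum>j<n. aa n K j \<omega> * hD n \<eta> j \<omega>) \<partial>M)"
      by (rule Bochner_Integration.integral_sum[symmetric]) (use IaD in auto)
    also have "\<dots> \<le> (\<integral>\<omega>. lam * hA n \<eta> \<omega> + (U n K \<omega>)\<^sup>2 / lam \<partial>M)"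
      using IaD hAI U2_int T2_pw[OF lam] by (intro integral_mono Bochner_Integration.integrable_sum) auto
    also have "\<dots> = lam * (\<integral>\<omega>. hA n \<eta> \<omega> \<partial>M) + (\<integral>\<omega>. (U n K \<omega>)\<^sup>2 \<partial>M) / lam"
      using hAI U2_int by simp
    also have "\<dots> \<le> lam * (\<integral>\<omega>. hA n \<eta> \<omega> \<partial>M) + (4 * K\<^sup>2 + 2 * q t) * q t / lam"
      using U2_exp[OF n, of K] lam by (simp add: divide_right_mono)
    finally show ?thesis by (simp add: sum_distrib_left[symmetric] mult_left_mono)
  qed
  have C: "(\<Sum>j<n. 4 * u\<^sup>2 * (\<integral>\<omega>. ee n K j \<omega> * (S n (Suc j) \<omega>)\<^sup>2 \<partial>M)) \<le> 4 * u\<^sup>2 * (\<integral>\<omega>. (1 - gi n K n \<omega>) * (X t \<omega>)\<^sup>2 \<partial>M)"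
  proof -
    have "(\<Sum>j<n. (\<integral>\<omega>. ee n K j \<omega> * (S n (Suc j) \<omega>)\<^sup>2 \<partial>M)) \<le> (\<Sum>j<n. (\<integral>\<omega>. ee n K j \<omega> * (X t \<omega>)\<^sup>2 \<partial>M))"
      by (intro sum_mono T3_step) auto
    also have "\<dots> = (\<integral>\<omega>. (\<Sum>j<n. ee n K j \<omega>) * (X t \<omega>)\<^sup>2 \<partial>M)"
      by (subst Bochner_Integration.integral_sum[symmetric]) (use IeX in \<open>auto simp: sum_distrib_right\<close>)
    also have "\<dots> \<le> (\<integral>\<omega>. (1 - gi n K n \<omega>) * (X t \<omega>)\<^sup>2 \<partial>M)"
    proof (rule integral_mono)
      show "integrable M (\<lambda>\<omega>. (\<Sum>j<n. ee n K j \<omega>) * (X t \<omega>)\<^sup>2)"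
        unfolding sum_distrib_right by (rule Bochner_Integration.integrable_sum) (rule IeX, simp)
      show "integrable M (\<lambda>\<omega>. (1 - gi n K n \<omega>) * (X t \<omega>)\<^sup>2)"
      proof (rule int_bdd_mult[OF sqint[OF tt], where B=1])
        show "(\<lambda>\<omega>. 1 - gi n K n \<omega>) \<in> borel_measurable M" using gi_M[of n n K] by measurable
      qed (auto simp: gi_def)
      fix \<omega>
      show "(\<Sum>j<n. ee n K j \<omega>) * (X t \<omega>)\<^sup>2 \<le> (1 - gi n K n \<omega>) * (X t \<omega>)\<^sup>2"
        unfolding ee_telescope using gi_le1[of n K 0 \<omega>] by (intro mult_right_mono) auto
    qed
    finally have "(\<Sum>j<n. (\<integral>\<omega>. ee n K j \<omega> * (S n (Suc j) \<omega>)\<^sup>2 \<partial>M)) \<le> (\<integral>\<omega>. (1 - gi n K n \<omega>) * (X t \<omega>)\<^sup>2 \<partial>M)" .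
    then have "4 * u\<^sup>2 * (\<Sum>j<n. (\<integral>\<omega>. ee n K j \<omega> * (S n (Suc j) \<omega>)\<^sup>2 \<partial>M)) \<le> 4 * u\<^sup>2 * (\<integral>\<omega>. (1 - gi n K n \<omega>) * (X t \<omega>)\<^sup>2 \<partial>M)"
      by (intro mult_left_mono) auto
    then show ?thesis by (simp add: sum_distrib_left)
  qed
  have "(\<Sum>j<n. \<integral>\<omega>. gi n K j \<omega> * cmod (Rm (u * Dl n j \<omega>)) \<partial>M)
      \<le> (\<Sum>j<n. c1 * (\<integral>\<omega>. gi n K j \<omega> * (Dl n j \<omega>)\<^sup>2 \<partial>M) + u\<^sup>2 * (\<integral>\<omega>. aa n K j \<omega> * hD n \<eta> j \<omega> \<partial>M)
       + 4 * u\<^sup>2 * (\<integral>\<omega>. ee n K j \<omega> * (S n (Suc j) \<omega>)\<^sup>2 \<partial>M))"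
    using step by (intro sum_mono) auto
  also have "\<dots> = (\<Sum>j<n. c1 * (\<integral>\<omega>. gi n K j \<omega> * (Dl n j \<omega>)\<^sup>2 \<partial>M)) + (\<Sum>j<n. u\<^sup>2 * (\<integral>\<omega>. aa n K j \<omega> * hD n \<eta> j \<omega> \<partial>M))
       + (\<Sum>j<n. 4 * u\<^sup>2 * (\<integral>\<omega>. ee n K j \<omega> * (S n (Suc j) \<omega>)\<^sup>2 \<partial>M))"
    by (simp add: sum.distrib)
  also have "\<dots> \<le> c1 * q t + u\<^sup>2 * (lam * (\<integral>\<omega>. hA n \<eta> \<omega> \<partial>M) + (4 * K\<^sup>2 + 2 * q t) * q t / lam)
      + 4 * u\<^sup>2 * (\<integral>\<omega>. (1 - gi n K n \<omega>) * (X t \<omega>)\<^sup>2 \<partial>M)"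
    using A B C by linarith
  finally show ?thesis unfolding c1_def .
qed

theorem discrete_bound:
  fixes u K \<eta> lam :: real and n :: nat
  assumes n: "0 < n" and eta: "0 < \<eta>" and lam: "0 < lam"
  defines "B \<equiv> exp (u\<^sup>2 * q t / 2)"
  shows "cmod ((CLINT \<omega>|M. Z u n n \<omega>) - 1)
    \<le> 2 * B * (\<integral>\<omega>. 1 - gi n K n \<omega> \<partial>M) + B\<^sup>2 * (\<Sum>j<n. (u\<^sup>2 * dq n j / 2)\<^sup>2)
      + B\<^sup>2 * ((\<bar>u\<bar>^3 * \<eta> / 6) * q t + u\<^sup>2 * (lam * (\<integral>\<omega>. hA n \<eta> \<omega> \<partial>M) + (4 * K\<^sup>2 + 2 * q t) * q t / lam)
      + 4 * u\<^sup>2 * (\<integral>\<omega>. (1 - gi n K n \<omega>) * (X t \<omega>)\<^sup>2 \<partial>M))"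
proof -
  let ?s = "\<lambda>j. CLINT \<omega>|M. complex_of_real (gi n K j \<omega>) * (Z u n (Suc j) \<omega> - Z u n j \<omega>)"
  have "cmod ((CLINT \<omega>|M. Z u n n \<omega>) - 1) \<le> cmod ((CLINT \<omega>|M. Z u n n \<omega>) - 1 - (\<Sum>j<n. ?s j)) + cmod (\<Sum>j<n. ?s j)"
    by (rule order_trans[OF _ norm_triangle_ineq]) simp
  also have "\<dots> \<le> 2 * B * (\<integral>\<omega>. 1 - gi n K n \<omega> \<partial>M) + (\<Sum>j<n. cmod (?s j))"
    using telescope[OF n, of u K] norm_sum[of ?s "{..<n}"] unfolding B_def by linarith
  also have "(\<Sum>j<n. cmod (?s j)) \<le> (\<Sum>j<n. B\<^sup>2 * (u\<^sup>2 * dq n j / 2)\<^sup>2 + B\<^sup>2 * (\<integral>\<omega>. gi n K j \<omega> * cmod (Rm (u * Dl n j \<omega>)) \<partial>M))"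
    unfolding B_def using step_bound[OF n] by (intro sum_mono) auto
  also have "\<dots> = B\<^sup>2 * (\<Sum>j<n. (u\<^sup>2 * dq n j / 2)\<^sup>2) + B\<^sup>2 * (\<Sum>j<n. \<integral>\<omega>. gi n K j \<omega> * cmod (Rm (u * Dl n j \<omega>)) \<partial>M)"
    by (simp add: sum.distrib sum_distrib_left)
  also have "B\<^sup>2 * (\<Sum>j<n. \<integral>\<omega>. gi n K j \<omega> * cmod (Rm (u * Dl n j \<omega>)) \<partial>M) \<le> B\<^sup>2 * ((\<bar>u\<bar>^3 * \<eta> / 6) * q t + u\<^sup>2 * (lam * (\<integral>\<omega>. hA n \<eta> \<omega> \<partial>M) + (4 * K\<^sup>2 + 2 * q t) * q t / lam)
      + 4 * u\<^sup>2 * (\<integral>\<omega>. (1 - gi n K n \<omega>) * (X t \<omega>)\<^sup>2 \<partial>M))"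
    using sum_Rm_bound[OF n eta lam, of K u] by (intro mult_left_mono) auto
  finally show ?thesis by simp
qed

end


context qv_setup0
begin

definition Dset :: "real set" where "Dset = (\<lambda>r. t * real_of_rat r) ` {r. 0 \<le> r \<and> r \<le> 1}"
definition BK :: "real \<Rightarrow> 'a set" where "BK K = {\<omega> \<in> space M. \<exists>s\<in>Dset. K < \<bar>X s \<omega>\<bar>}"

lemma Dset_countable: "countable Dset"
  unfolding Dset_def by (rule countable_image) (rule countable_subset[OF subset_UNIV countableI_type])

lemma Dset_sub: "s \<in> Dset \<Longrightarrow> 0 \<le> s \<and> s \<le> t"
proof -
  assume "s \<in> Dset"
  then obtain r where r: "s = t * real_of_rat r" "0 \<le> r" "r \<le> 1" unfolding Dset_def by auto
  have "0 \<le> real_of_rat r" "real_of_rat r \<le> 1" using r by simp_all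
  then show ?thesis using r(1) t_nonneg by (auto intro: mult_left_le)
qed

lemma tt_Dset: "0 < n \<Longrightarrow> j \<le> n \<Longrightarrow> tt n j \<in> Dset"
proof -
  assume a: "0 < n" "j \<le> n"
  have "tt n j = t * real_of_rat (of_nat j / of_nat n)" by (simp add: tt_def of_rat_divide)
  moreover have "0 \<le> (of_nat j / of_nat n :: rat) \<and> (of_nat j / of_nat n :: rat) \<le> 1" using a by auto
  ultimately show ?thesis unfolding Dset_def by blast
qed

lemma BK_sets: "BK K \<in> sets M"
  unfolding BK_def
proof (rule sets.sets_Collect_countable_Ex'[OF _ Dset_countable])
  fix s assume "s \<in> Dset"
  then have s: "0 \<le> s" "s \<le> t" using Dset_sub by auto
  have [measurable]: "X s \<in> borel_measurable M" using Xmeas[OF s] .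
  show "{x \<in> space M. K < \<bar>X s x\<bar>} \<in> sets M" by measurable
qed

lemma gi_BK: "0 < n \<Longrightarrow> \<omega> \<in> space M \<Longrightarrow> 1 - gi n K n \<omega> \<le> indicator (BK K) \<omega>"
proof -
  assume a: "0 < n" "\<omega> \<in> space M"
  show ?thesis
  proof (cases "G n K n \<omega>")
    case True then show ?thesis by (simp add: gi_def)
  next
    case False
    then obtain i where i: "i \<le> n" "K < \<bar>S n i \<omega>\<bar>" by (auto simp: G_def not_le)
    then have "\<omega> \<in> BK K" unfolding BK_def S_def using a tt_Dset[OF a(1) i(1)] by auto
    then show ?thesis by (simp add: gi_def)
  qed
qed

lemma bdd_path: "AE \<omega> in M. \<exists>Bd. \<forall>s\<in>{0..t}. \<bar>X s \<omega>\<bar> \<le> Bd"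
  using cont
proof eventually_elim
  case (elim \<omega>)
  have "compact ((\<lambda>s. X s \<omega>) ` {0..t})" by (rule compact_continuous_image[OF elim compact_Icc])
  then have "bounded ((\<lambda>s. X s \<omega>) ` {0..t})" by (rule compact_imp_bounded)
  then show ?case unfolding bounded_real by auto
qed

lemma BK_lim: "AE \<omega> in M. (\<lambda>K::nat. indicator (BK (real K)) \<omega> :: real) \<longlonglongrightarrow> 0"
  using bdd_path
proof eventually_elim
  case (elim \<omega>)
  then obtain Bd where Bd: "\<And>s. s \<in> {0..t} \<Longrightarrow> \<bar>X s \<omega>\<bar> \<le> Bd" by blast
  obtain N :: nat where N: "Bd < real N" using reals_Archimedean2 by blast
  have "eventually (\<lambda>K. indicator (BK (real K)) \<omega> = (0::real)) sequentially"
    unfolding eventually_sequentially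
  proof (intro exI allI impI)
    fix K assume "N \<le> K"
    then have "Bd < real K" using N by linarith
    then have "\<omega> \<notin> BK (real K)" unfolding BK_def using Bd Dset_sub by fastforce
    then show "indicator (BK (real K)) \<omega> = (0::real)" by simp
  qed
  then show ?case by (rule tendsto_eventually)
qed

lemma hA_lim:
  assumes "0 < \<eta>"
  shows "AE \<omega> in M. (\<lambda>n. hA n \<eta> \<omega>) \<longlonglongrightarrow> 0"
  using cont
proof eventually_elim
  case (elim \<omega>)
  have "uniformly_continuous_on {0..t} (\<lambda>s. X s \<omega>)"
    by (rule compact_uniformly_continuous[OF elim compact_Icc])
  then obtain d where d: "0 < d" "\<And>s s'. s \<in> {0..t} \<Longrightarrow> s' \<in> {0..t} \<Longrightarrow> dist s' s < d \<Longrightarrow> dist (X s' \<omega>) (X s \<omega>) < \<eta>"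
    unfolding uniformly_continuous_on_def using assms by metis
  obtain N :: nat where N: "t / d < real N" using reals_Archimedean2 by blast
  have "eventually (\<lambda>n. hA n \<eta> \<omega> = 0) sequentially"
    unfolding eventually_sequentially
  proof (intro exI allI impI)
    fix n assume nN: "Suc N \<le> n"
    then have n0: "0 < n" by simp
    have "t / d < real n" using N nN by linarith
    then have "t < real n * d" using d(1) by (simp add: divide_less_eq mult.commute)
    then have tn: "t / real n < d" using n0 by (simp add: divide_less_eq mult.commute)
    have "\<forall>j<n. \<not> \<eta> < \<bar>Dl n j \<omega>\<bar>"
    proof (intro allI impI)
      fix j assume j: "j < n"
      have r: "tt n (Suc j) \<in> {0..t}" "tt n j \<in> {0..t}" using tt_nonneg tt_le[of "Suc j" n] tt_le[of j n] j by auto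
      have "tt n (Suc j) - tt n j = t / real n" unfolding tt_def by (simp add: diff_divide_distrib[symmetric] algebra_simps)
      then have "dist (tt n (Suc j)) (tt n j) < d" using tn t_nonneg n0 by (simp add: dist_real_def)
      then have "dist (X (tt n (Suc j)) \<omega>) (X (tt n j) \<omega>) < \<eta>" using d(2)[OF r(2) r(1)] by simp
      then show "\<not> \<eta> < \<bar>Dl n j \<omega>\<bar>" by (simp add: Dl_def S_def dist_real_def)
    qed
    then show "hA n \<eta> \<omega> = 0" by (simp add: hA_def)
  qed
  then show ?case by (rule tendsto_eventually)
qed

lemma dq_small:
  assumes "0 < e"
  shows "eventually (\<lambda>n. \<forall>j<n. dq n j \<le> e) sequentially"
proof -
  have "uniformly_continuous_on {0..t} q" by (rule compact_uniformly_continuous[OF qcont compact_Icc])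
  then obtain d where d: "0 < d" "\<And>s s'. s \<in> {0..t} \<Longrightarrow> s' \<in> {0..t} \<Longrightarrow> dist s' s < d \<Longrightarrow> dist (q s') (q s) < e"
    unfolding uniformly_continuous_on_def using assms by metis
  obtain N :: nat where N: "t / d < real N" using reals_Archimedean2 by blast
  show ?thesis unfolding eventually_sequentially
  proof (rule exI, rule allI, rule impI)
    fix n assume nN: "Suc N \<le> n"
    then have n0: "0 < n" by simp
    have "t / d < real n" using N nN by linarith
    then have "t < real n * d" using d(1) by (simp add: divide_less_eq mult.commute)
    then have tn: "t / real n < d" using n0 by (simp add: divide_less_eq mult.commute)
    show "\<forall>j<n. dq n j \<le> e"
    proof (intro allI impI)
      fix j assume j: "j < n"
      have r: "tt n (Suc j) \<in> {0..t}" "tt n j \<in> {0..t}" using tt_nonneg tt_le[of "Suc j" n] tt_le[of j n] j by auto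
      have "tt n (Suc j) - tt n j = t / real n" unfolding tt_def by (simp add: diff_divide_distrib[symmetric] algebra_simps)
      then have "dist (tt n (Suc j)) (tt n j) < d" using tn t_nonneg n0 by (simp add: dist_real_def)
      then have "dist (q (tt n (Suc j))) (q (tt n j)) < e" using d(2)[OF r(2) r(1)] by simp
      then show "dq n j \<le> e" by (simp add: dq_def dist_real_def)
    qed
  qed
qed

lemma sum_dq2_small:
  assumes "0 < n" "\<forall>j<n. dq n j \<le> e"
  shows "(\<Sum>j<n. (dq n j)\<^sup>2) \<le> e * q t"
proof -
  have "(\<Sum>j<n. (dq n j)\<^sup>2) \<le> (\<Sum>j<n. e * dq n j)"
    using assms(2) dq_nonneg by (intro sum_mono) (auto simp: power2_eq_square intro: mult_right_mono)
  also have "\<dots> = e * q t" using sum_dq[OF assms(1)] by (simp add: sum_distrib_left[symmetric])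
  finally show ?thesis .
qed

lemma lim_PBK: "(\<lambda>K::nat. measure M (BK (real K))) \<longlonglongrightarrow> 0"
proof -
  have "(\<lambda>K::nat. \<integral>\<omega>. indicator (BK (real K)) \<omega> \<partial>M) \<longlonglongrightarrow> (\<integral>\<omega>. (0::real) \<partial>M)"
  proof (rule integral_dominated_convergence[where w="\<lambda>_. 1"])
    show "(\<lambda>_. 0::real) \<in> borel_measurable M" by simp
    show "\<And>K. (indicator (BK (real K)) :: 'a \<Rightarrow> real) \<in> borel_measurable M" using BK_sets by simp
    show "integrable M (\<lambda>_. 1::real)" by simp
    show "AE x in M. (\<lambda>i. indicator (BK (real i)) x :: real) \<longlonglongrightarrow> 0" by (rule BK_lim)
    show "\<And>i. AE x in M. norm (indicator (BK (real i)) x :: real) \<le> 1" by (auto simp: indicator_def)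
  qed
  then show ?thesis using BK_sets by (simp add: Int_absorb2 sets.sets_into_space)
qed

lemma lim_XBK: "(\<lambda>K::nat. \<integral>\<omega>. indicator (BK (real K)) \<omega> * (X t \<omega>)\<^sup>2 \<partial>M) \<longlonglongrightarrow> 0"
proof -
  have tt: "0 \<le> t" "t \<le> t" using t_nonneg by auto
  have [measurable]: "X t \<in> borel_measurable M" using Xmeas[OF tt] .
  have "(\<lambda>K::nat. \<integral>\<omega>. indicator (BK (real K)) \<omega> * (X t \<omega>)\<^sup>2 \<partial>M) \<longlonglongrightarrow> (\<integral>\<omega>. (0::real) \<partial>M)"
  proof (rule integral_dominated_convergence[where w="\<lambda>\<omega>. (X t \<omega>)\<^sup>2"])
    show "(\<lambda>_. 0::real) \<in> borel_measurable M" by simp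
    show "\<And>K. (\<lambda>\<omega>. indicator (BK (real K)) \<omega> * (X t \<omega>)\<^sup>2) \<in> borel_measurable M" using BK_sets by measurable
    show "integrable M (\<lambda>\<omega>. (X t \<omega>)\<^sup>2)" by (rule sqint[OF tt])
    show "AE x in M. (\<lambda>i. indicator (BK (real i)) x * (X t x)\<^sup>2) \<longlonglongrightarrow> 0"
      using BK_lim by eventually_elim (auto intro: tendsto_mult_left_zero)
    show "\<And>i. AE x in M. norm (indicator (BK (real i)) x * (X t x)\<^sup>2) \<le> (X t x)\<^sup>2" by (auto simp: indicator_def)
  qed
  then show ?thesis by simp
qed

lemma lim_hA: "0 < \<eta> \<Longrightarrow> (\<lambda>n. \<integral>\<omega>. hA n \<eta> \<omega> \<partial>M) \<longlonglongrightarrow> 0"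
proof -
  assume eta: "0 < \<eta>"
  have "(\<lambda>n. \<integral>\<omega>. hA n \<eta> \<omega> \<partial>M) \<longlonglongrightarrow> (\<integral>\<omega>. (0::real) \<partial>M)"
  proof (rule integral_dominated_convergence[where w="\<lambda>_. 1"])
    show "(\<lambda>_. 0::real) \<in> borel_measurable M" by simp
    show "\<And>n. hA n \<eta> \<in> borel_measurable M" by simp
    show "integrable M (\<lambda>_. 1::real)" by simp
    show "AE x in M. (\<lambda>n. hA n \<eta> x) \<longlonglongrightarrow> 0" by (rule hA_lim[OF eta])
    show "\<And>n. AE x in M. norm (hA n \<eta> x) \<le> 1" by (auto simp: hA_def)
  qed
  then show ?thesis by simp
qed

end


lemma aux_frac: fixes A e :: real assumes "0 \<le> A" "0 < e" shows "A * (e / (1 + A)) \<le> e"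
proof -
  have "A * (e / (1 + A)) = e * (A / (1 + A))" by simp
  also have "A / (1 + A) \<le> 1" using assms by simp
  then have "e * (A / (1 + A)) \<le> e * 1" using assms by (intro mult_left_mono) auto
  finally show ?thesis by simp
qed

lemma aux_frac2: fixes A e :: real assumes "0 \<le> A" "0 < e" shows "A / (1 + A / e) \<le> e"
proof -
  have pos: "0 < 1 + A / e" using assms by (simp add: add_pos_nonneg)
  have "A \<le> e * (1 + A / e)" using assms by (simp add: field_simps)
  then show ?thesis using pos by (simp add: divide_le_eq)
qed

lemma distr6: fixes a b c x v l h w j :: real
  shows "a + b + c * (x + v * (l * h + w / l) + 4 * v * j) = a + b + c * x + c * v * l * h + c * v * (w / l) + c * (4 * v) * j"
  by (simp add: algebra_simps)

context qv_setup0
begin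

lemma EZn: "0 < n \<Longrightarrow> (CLINT \<omega>|M. Z u n n \<omega>) = (CLINT \<omega>|M. iexp (u * X t \<omega>)) * complex_of_real (exp (u\<^sup>2 * q t / 2))"
  by (simp add: Z_def S_def tt_n)

lemma char_main: "(CLINT \<omega>|M. iexp (u * X t \<omega>)) * complex_of_real (exp (u\<^sup>2 * q t / 2)) = 1"
proof -
  define B where "B = exp (u\<^sup>2 * q t / 2)"
  define \<phi> where "\<phi> = (CLINT \<omega>|M. iexp (u * X t \<omega>))"
  have Bpos: "0 < B" unfolding B_def by simp
  have qt: "0 \<le> q t" using q_nonneg t_nonneg by auto
  have tt: "0 \<le> t" "t \<le> t" using t_nonneg by auto
  have XtM[measurable]: "X t \<in> borel_measurable M" using Xmeas[OF tt] .
  have main: "cmod (\<phi> * complex_of_real B - 1) \<le> \<epsilon>" if eps: "0 < \<epsilon>" for \<epsilon>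
  proof -
    define e where "e = \<epsilon> / 6"
    have e: "0 < e" unfolding e_def using eps by simp
    have l1: "(\<lambda>K::nat. 2 * B * measure M (BK (real K))) \<longlonglongrightarrow> 0"
      using lim_PBK by (rule tendsto_mult_right_zero)
    have l2: "(\<lambda>K::nat. B\<^sup>2 * (4 * u\<^sup>2) * (\<integral>\<omega>. indicator (BK (real K)) \<omega> * (X t \<omega>)\<^sup>2 \<partial>M)) \<longlonglongrightarrow> 0"
      using lim_XBK by (rule tendsto_mult_right_zero)
    have ev1: "eventually (\<lambda>K. 2 * B * measure M (BK (real K)) < e \<and> B\<^sup>2 * (4 * u\<^sup>2) * (\<integral>\<omega>. indicator (BK (real K)) \<omega> * (X t \<omega>)\<^sup>2 \<partial>M) < e) sequentially"
      using order_tendstoD(2)[OF l1 e] order_tendstoD(2)[OF l2 e] by (rule eventually_conj)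
    obtain K :: nat where "\<forall>k\<ge>K. 2 * B * measure M (BK (real k)) < e \<and> B\<^sup>2 * (4 * u\<^sup>2) * (\<integral>\<omega>. indicator (BK (real k)) \<omega> * (X t \<omega>)\<^sup>2 \<partial>M) < e"
      using ev1[unfolded eventually_sequentially] by (rule exE)
    then have "2 * B * measure M (BK (real K)) < e \<and> B\<^sup>2 * (4 * u\<^sup>2) * (\<integral>\<omega>. indicator (BK (real K)) \<omega> * (X t \<omega>)\<^sup>2 \<partial>M) < e"
      by simp
    then have K1: "2 * B * measure M (BK (real K)) < e"
      and K2: "B\<^sup>2 * (4 * u\<^sup>2) * (\<integral>\<omega>. indicator (BK (real K)) \<omega> * (X t \<omega>)\<^sup>2 \<partial>M) < e"
      by auto
    define A5 where "A5 = B\<^sup>2 * u\<^sup>2 * ((4 * (real K)\<^sup>2 + 2 * q t) * q t)"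
    have A5: "0 \<le> A5" unfolding A5_def using qt by simp
    define lam where "lam = 1 + A5 / e"
    have lam: "0 < lam" unfolding lam_def using A5 e by (simp add: add_pos_nonneg)
    have t5: "A5 / lam \<le> e" unfolding lam_def by (rule aux_frac2[OF A5 e])
    define A3 where "A3 = B\<^sup>2 * \<bar>u\<bar>^3 * q t"
    have A3: "0 \<le> A3" unfolding A3_def using qt by simp
    define \<eta> where "\<eta> = e / (1 + A3)"
    have eta: "0 < \<eta>" unfolding \<eta>_def using A3 e by simp
    have t3: "A3 * \<eta> \<le> e" unfolding \<eta>_def by (rule aux_frac[OF A3 e])
    define A2 where "A2 = B\<^sup>2 * u^4 * q t"
    have A2: "0 \<le> A2" unfolding A2_def using qt by simp
    define e' where "e' = e / (1 + A2)"
    have e': "0 < e'" unfolding e'_def using A2 e by simp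
    have t2': "A2 * e' \<le> e" unfolding e'_def by (rule aux_frac[OF A2 e])
    have l4: "(\<lambda>n. B\<^sup>2 * u\<^sup>2 * lam * (\<integral>\<omega>. hA n \<eta> \<omega> \<partial>M)) \<longlonglongrightarrow> 0"
      using lim_hA[OF eta] by (rule tendsto_mult_right_zero)
    have ev2: "eventually (\<lambda>n. B\<^sup>2 * u\<^sup>2 * lam * (\<integral>\<omega>. hA n \<eta> \<omega> \<partial>M) < e \<and> (\<forall>j<n. dq n j \<le> e') \<and> 0 < n) sequentially"
      using order_tendstoD(2)[OF l4 e] dq_small[OF e'] eventually_gt_at_top[of 0]
      by (intro eventually_conj)
    obtain n where "\<forall>m\<ge>n. B\<^sup>2 * u\<^sup>2 * lam * (\<integral>\<omega>. hA m \<eta> \<omega> \<partial>M) < e \<and> (\<forall>j<m. dq m j \<le> e') \<and> 0 < m"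
      using ev2[unfolded eventually_sequentially] by (rule exE)
    then have "B\<^sup>2 * u\<^sup>2 * lam * (\<integral>\<omega>. hA n \<eta> \<omega> \<partial>M) < e \<and> (\<forall>j<n. dq n j \<le> e') \<and> 0 < n"
      by simp
    then have n4: "B\<^sup>2 * u\<^sup>2 * lam * (\<integral>\<omega>. hA n \<eta> \<omega> \<partial>M) < e" and ndq: "\<forall>j<n. dq n j \<le> e'" and n: "0 < n"
      by auto
    note DB = discrete_bound[OF n eta lam, where u=u and K="real K"]
    have I1: "(\<integral>\<omega>. 1 - gi n (real K) n \<omega> \<partial>M) \<le> measure M (BK (real K))"
    proof -
      have "(\<integral>\<omega>. 1 - gi n (real K) n \<omega> \<partial>M) \<le> (\<integral>\<omega>. indicator (BK (real K)) \<omega> \<partial>M)"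
      proof (rule integral_mono)
        show "integrable M (\<lambda>\<omega>. 1 - gi n (real K) n \<omega>)" using gi_int[of n n "real K"] by simp
        show "integrable M (\<lambda>\<omega>. indicator (BK (real K)) \<omega> :: real)"
          by (rule bdd_int[where B=1]) (use BK_sets in auto)
      qed (rule gi_BK[OF n])
      then show ?thesis using BK_sets by (simp add: Int_absorb2 sets.sets_into_space)
    qed
    have I6: "(\<integral>\<omega>. (1 - gi n (real K) n \<omega>) * (X t \<omega>)\<^sup>2 \<partial>M) \<le> (\<integral>\<omega>. indicator (BK (real K)) \<omega> * (X t \<omega>)\<^sup>2 \<partial>M)"
    proof (rule integral_mono)
      show "integrable M (\<lambda>\<omega>. (1 - gi n (real K) n \<omega>) * (X t \<omega>)\<^sup>2)"
      proof (rule int_bdd_mult[OF sqint[OF tt], where B=1])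
        show "(\<lambda>\<omega>. 1 - gi n (real K) n \<omega>) \<in> borel_measurable M" using gi_M[of n n "real K"] by measurable
      qed (auto simp: gi_def)
      show "integrable M (\<lambda>\<omega>. indicator (BK (real K)) \<omega> * (X t \<omega>)\<^sup>2)"
        by (rule int_bdd_mult[OF sqint[OF tt], where B=1]) (use BK_sets in auto)
      fix \<omega> assume "\<omega> \<in> space M"
      then show "(1 - gi n (real K) n \<omega>) * (X t \<omega>)\<^sup>2 \<le> indicator (BK (real K)) \<omega> * (X t \<omega>)\<^sup>2"
        using gi_BK[OF n] by (intro mult_right_mono) auto
    qed
    have T1: "2 * B * (\<integral>\<omega>. 1 - gi n (real K) n \<omega> \<partial>M) \<le> e"
    proof -
      have "2 * B * (\<integral>\<omega>. 1 - gi n (real K) n \<omega> \<partial>M) \<le> 2 * B * measure M (BK (real K))"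
        using I1 Bpos by (intro mult_left_mono) auto
      then show ?thesis using K1 by linarith
    qed
    have T6: "B\<^sup>2 * (4 * u\<^sup>2) * (\<integral>\<omega>. (1 - gi n (real K) n \<omega>) * (X t \<omega>)\<^sup>2 \<partial>M) \<le> e"
    proof -
      have "B\<^sup>2 * (4 * u\<^sup>2) * (\<integral>\<omega>. (1 - gi n (real K) n \<omega>) * (X t \<omega>)\<^sup>2 \<partial>M) \<le> B\<^sup>2 * (4 * u\<^sup>2) * (\<integral>\<omega>. indicator (BK (real K)) \<omega> * (X t \<omega>)\<^sup>2 \<partial>M)"
        using I6 by (intro mult_left_mono) auto
      then show ?thesis using K2 by linarith
    qed
    have T2: "B\<^sup>2 * (\<Sum>j<n. (u\<^sup>2 * dq n j / 2)\<^sup>2) \<le> e"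
    proof -
      have pw: "\<And>d. (u\<^sup>2 * d / 2)\<^sup>2 = u^4 / 4 * d\<^sup>2" by (simp add: power2_eq_square power4_eq_xxxx field_simps)
      have "(\<Sum>j<n. (u\<^sup>2 * dq n j / 2)\<^sup>2) = u^4 / 4 * (\<Sum>j<n. (dq n j)\<^sup>2)"
        unfolding pw by (simp add: sum_distrib_left)
      also have "\<dots> \<le> u^4 / 4 * (e' * q t)" using sum_dq2_small[OF n ndq] by (intro mult_left_mono) auto
      finally have "B\<^sup>2 * (\<Sum>j<n. (u\<^sup>2 * dq n j / 2)\<^sup>2) \<le> B\<^sup>2 * (u^4 / 4 * (e' * q t))"
        by (intro mult_left_mono) auto
      also have "\<dots> = (A2 * e') / 4" unfolding A2_def by (simp add: algebra_simps)
      also have "\<dots> \<le> e" using t2' mult_nonneg_nonneg[OF A2 less_imp_le[OF e']] by linarith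
      finally show ?thesis .
    qed
    have T3: "B\<^sup>2 * (\<bar>u\<bar>^3 * \<eta> / 6 * q t) \<le> e"
    proof -
      have "B\<^sup>2 * (\<bar>u\<bar>^3 * \<eta> / 6 * q t) = (A3 * \<eta>) / 6" unfolding A3_def by (simp add: algebra_simps)
      also have "\<dots> \<le> e" using t3 mult_nonneg_nonneg[OF A3 less_imp_le[OF eta]] by linarith
      finally show ?thesis .
    qed
    have T5: "B\<^sup>2 * u\<^sup>2 * ((4 * (real K)\<^sup>2 + 2 * q t) * q t / lam) \<le> e"
      using t5 unfolding A5_def by (simp add: algebra_simps)
    have "cmod (\<phi> * complex_of_real B - 1) = cmod ((CLINT \<omega>|M. Z u n n \<omega>) - 1)"
      unfolding \<phi>_def B_def using EZn[OF n] by simp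
    also have "\<dots> \<le> 2 * B * (\<integral>\<omega>. 1 - gi n (real K) n \<omega> \<partial>M) + B\<^sup>2 * (\<Sum>j<n. (u\<^sup>2 * dq n j / 2)\<^sup>2)
      + B\<^sup>2 * ((\<bar>u\<bar>^3 * \<eta> / 6) * q t + u\<^sup>2 * (lam * (\<integral>\<omega>. hA n \<eta> \<omega> \<partial>M) + (4 * (real K)\<^sup>2 + 2 * q t) * q t / lam)
      + 4 * u\<^sup>2 * (\<integral>\<omega>. (1 - gi n (real K) n \<omega>) * (X t \<omega>)\<^sup>2 \<partial>M))"
      using DB unfolding B_def .
    also have "\<dots> = 2 * B * (\<integral>\<omega>. 1 - gi n (real K) n \<omega> \<partial>M) + B\<^sup>2 * (\<Sum>j<n. (u\<^sup>2 * dq n j / 2)\<^sup>2)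
      + B\<^sup>2 * ((\<bar>u\<bar>^3 * \<eta> / 6) * q t) + B\<^sup>2 * u\<^sup>2 * lam * (\<integral>\<omega>. hA n \<eta> \<omega> \<partial>M)
      + B\<^sup>2 * u\<^sup>2 * ((4 * (real K)\<^sup>2 + 2 * q t) * q t / lam)
      + B\<^sup>2 * (4 * u\<^sup>2) * (\<integral>\<omega>. (1 - gi n (real K) n \<omega>) * (X t \<omega>)\<^sup>2 \<partial>M)"
      by (rule distr6)
    also have "\<dots> \<le> 6 * e" using T1 T2 T3 n4 T5 T6 by linarith
    finally show ?thesis unfolding e_def by simp
  qed
  have "cmod (\<phi> * complex_of_real B - 1) \<le> 0"
  proof (rule field_le_epsilon)
    fix e :: real assume e: "0 < e"
    show "cmod (\<phi> * complex_of_real B - 1) \<le> 0 + e" using main[OF e] by (simp only: add_0_left)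
  qed
  then have "\<phi> * complex_of_real B - 1 = 0" by (simp only: norm_le_zero_iff)
  then have "\<phi> * complex_of_real B = 1" by (simp only: right_minus_eq)
  then show ?thesis unfolding \<phi>_def B_def .
qed

theorem char_X: "(CLINT \<omega>|M. iexp (u * X t \<omega>)) = complex_of_real (exp (- (u\<^sup>2 * q t) / 2))"
proof -
  have "(CLINT \<omega>|M. iexp (u * X t \<omega>)) * complex_of_real (exp (u\<^sup>2 * q t / 2)) = 1" by (rule char_main)
  then have "(CLINT \<omega>|M. iexp (u * X t \<omega>)) = 1 / complex_of_real (exp (u\<^sup>2 * q t / 2))"
    by (simp add: field_simps)
  also have "\<dots> = complex_of_real (exp (- (u\<^sup>2 * q t) / 2))"
    by (simp add: exp_minus inverse_eq_divide)
  finally show ?thesis .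
qed

end


lemma entire_zero:
  fixes f :: "complex \<Rightarrow> complex"
  assumes hol: "f holomorphic_on UNIV" and unc: "uncountable {x::real. f (complex_of_real x) = 0}"
  shows "f z = 0"
proof -
  define Zc where "Zc = complex_of_real ` {x::real. f (complex_of_real x) = 0}"
  have "\<exists>\<xi>. \<xi> islimpt Zc"
  proof (rule ccontr)
    assume "\<not> (\<exists>\<xi>. \<xi> islimpt Zc)"
    then have "Zc sparse_in UNIV" by (simp add: sparse_in_open)
    then have "countable (UNIV \<inter> Zc)" by (intro sparse_imp_countable) auto
    then have "countable (Re ` Zc)" by simp
    moreover have "Re ` Zc = {x::real. f (complex_of_real x) = 0}" unfolding Zc_def by (auto simp: image_image)
    ultimately show False using unc by simp
  qed
  then obtain \<xi> where xi: "\<xi> islimpt Zc" by blast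
  show ?thesis
    by (rule analytic_continuation[OF hol open_UNIV connected_UNIV subset_UNIV UNIV_I xi])
       (auto simp: Zc_def)
qed

context qv_setup0
begin

lemma distr_std:
  assumes qpos: "0 < q t"
  shows "distr M borel (\<lambda>\<omega>. X t \<omega> / sqrt (q t)) = std_normal_distribution"
proof (rule Levy_uniqueness)
  have tt: "0 \<le> t" "t \<le> t" using t_nonneg by auto
  have [measurable]: "X t \<in> borel_measurable M" using Xmeas[OF tt] .
  show "real_distribution (distr M borel (\<lambda>\<omega>. X t \<omega> / sqrt (q t)))" by (rule real_distribution_distr) simp
  show "real_distribution std_normal_distribution" by (rule real_dist_normal_dist)
  show "char (distr M borel (\<lambda>\<omega>. X t \<omega> / sqrt (q t))) = char std_normal_distribution"
  proof (rule ext)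
    fix v :: real
    have "char (distr M borel (\<lambda>\<omega>. X t \<omega> / sqrt (q t))) v = (CLINT \<omega>|M. iexp (v * (X t \<omega> / sqrt (q t))))"
      unfolding char_def by (subst integral_distr) auto
    also have "\<dots> = (CLINT \<omega>|M. iexp ((v / sqrt (q t)) * X t \<omega>))" by (simp add: field_simps)
    also have "\<dots> = complex_of_real (exp (- ((v / sqrt (q t))\<^sup>2 * q t) / 2))" by (rule char_X)
    also have "\<dots> = complex_of_real (exp (- (v\<^sup>2) / 2))" using qpos by (simp add: power_divide)
    also have "\<dots> = char std_normal_distribution v" by (simp add: char_std_normal_distribution)
    finally show "char (distr M borel (\<lambda>\<omega>. X t \<omega> / sqrt (q t))) v = char std_normal_distribution v" .
  qed
qed

lemma countable_null:
  assumes qpos: "0 < q t" and A: "countable A"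
  shows "AE \<omega> in M. X t \<omega> \<notin> A"
proof -
  have tt: "0 \<le> t" "t \<le> t" using t_nonneg by auto
  have [measurable]: "X t \<in> borel_measurable M" using Xmeas[OF tt] .
  define A' where "A' = (\<lambda>x. x / sqrt (q t)) ` A"
  have cA': "countable A'" unfolding A'_def using A by simp
  then have nA': "A' \<in> null_sets lborel" by (rule countable_imp_null_set_lborel)
  then have sA': "A' \<in> sets borel" by (simp add: null_sets_def)
  have "emeasure std_normal_distribution A' = (\<integral>\<^sup>+ x. ennreal (std_normal_density x) * indicator A' x \<partial>lborel)"
    using sA' by (subst emeasure_density) auto
  also have "\<dots> = 0" by (rule nn_integral_null_set[OF nA'])
  finally have e0: "emeasure std_normal_distribution A' = 0" .
  have "emeasure M ((\<lambda>\<omega>. X t \<omega> / sqrt (q t)) -` A' \<inter> space M) = emeasure (distr M borel (\<lambda>\<omega>. X t \<omega> / sqrt (q t))) A'"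
    using sA' by (subst emeasure_distr) auto
  also have "\<dots> = 0" using distr_std[OF qpos] e0 by simp
  finally have n: "(\<lambda>\<omega>. X t \<omega> / sqrt (q t)) -` A' \<inter> space M \<in> null_sets M"
    using sA' by (auto simp: null_sets_def intro!: measurable_sets[where A=borel])
  show ?thesis
  proof (rule AE_I'[OF n])
    show "{\<omega> \<in> space M. \<not> X t \<omega> \<notin> A} \<subseteq> (\<lambda>\<omega>. X t \<omega> / sqrt (q t)) -` A' \<inter> space M"
      unfolding A'_def by auto
  qed
qed

lemma zero_transfer:
  assumes qpos: "0 < q t" and hol: "f holomorphic_on UNIV" and ae: "AE \<omega> in M. f (complex_of_real (X t \<omega>)) = 0"
  shows "f z = 0"
proof (rule entire_zero[OF hol])
  show "uncountable {x::real. f (complex_of_real x) = 0}"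
  proof
    assume c: "countable {x::real. f (complex_of_real x) = 0}"
    have "AE \<omega> in M. X t \<omega> \<notin> {x::real. f (complex_of_real x) = 0}" by (rule countable_null[OF qpos c])
    with ae have "AE \<omega> in M. False" by eventually_elim simp
    then show False by (simp add: AE_False)
  qed
qed

end


lemma expsum_deriv:
  fixes l c :: "nat \<Rightarrow> complex" and Q :: complex
  shows "((\<lambda>z. \<Sum>k\<in>A. l k * exp (c k * z - (c k)\<^sup>2 * Q / 2)) has_field_derivative
          (\<Sum>k\<in>A. l k * c k * exp (c k * z - (c k)\<^sup>2 * Q / 2))) (at z)"
  by (auto intro!: derivative_eq_intros DERIV_sum simp: algebra_simps)

lemma expsum_holo:
  fixes l c :: "nat \<Rightarrow> complex" and Q :: complex
  shows "(\<lambda>z. \<Sum>k\<in>A. l k * exp (c k * z - (c k)\<^sup>2 * Q / 2)) holomorphic_on UNIV"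
  by (intro holomorphic_intros)

context qv_setup0
begin

lemma main_transfer:
  fixes l c m d :: "nat \<Rightarrow> complex" and A A' :: "nat set"
  assumes ae: "AE \<omega> in M. (\<Sum>k\<in>A. l k * stoch_exp X q (c k) t \<omega>) = (\<Sum>k\<in>A'. m k * stoch_exp X q (d k) t \<omega>)"
  shows "AE \<omega> in M. (\<Sum>k\<in>A. l k * c k * complex_of_real (q t) * stoch_exp X q (c k) t \<omega>)
                   = (\<Sum>k\<in>A'. m k * d k * complex_of_real (q t) * stoch_exp X q (d k) t \<omega>)"
proof -
  let ?Q = "complex_of_real (q t)"
  define F1 where "F1 = (\<lambda>z. \<Sum>k\<in>A. l k * exp (c k * z - (c k)\<^sup>2 * ?Q / 2))"
  define F2 where "F2 = (\<lambda>z. \<Sum>k\<in>A'. m k * exp (d k * z - (d k)\<^sup>2 * ?Q / 2))"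
  define G1 where "G1 = (\<lambda>z. \<Sum>k\<in>A. l k * c k * exp (c k * z - (c k)\<^sup>2 * ?Q / 2))"
  define G2 where "G2 = (\<lambda>z. \<Sum>k\<in>A'. m k * d k * exp (d k * z - (d k)\<^sup>2 * ?Q / 2))"
  have S1: "\<And>\<omega>. (\<Sum>k\<in>A. l k * stoch_exp X q (c k) t \<omega>) = F1 (complex_of_real (X t \<omega>))"
    unfolding F1_def stoch_exp_def by simp
  have S2: "\<And>\<omega>. (\<Sum>k\<in>A'. m k * stoch_exp X q (d k) t \<omega>) = F2 (complex_of_real (X t \<omega>))"
    unfolding F2_def stoch_exp_def by simp
  have D1: "\<And>\<omega>. (\<Sum>k\<in>A. l k * c k * ?Q * stoch_exp X q (c k) t \<omega>) = ?Q * G1 (complex_of_real (X t \<omega>))"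
    unfolding G1_def stoch_exp_def by (simp add: sum_distrib_left ac_simps)
  have D2: "\<And>\<omega>. (\<Sum>k\<in>A'. m k * d k * ?Q * stoch_exp X q (d k) t \<omega>) = ?Q * G2 (complex_of_real (X t \<omega>))"
    unfolding G2_def stoch_exp_def by (simp add: sum_distrib_left ac_simps)
  have qt: "0 \<le> q t" using q_nonneg t_nonneg by auto
  show ?thesis
  proof (cases "q t = 0")
    case True
    then show ?thesis unfolding D1 D2 by simp
  next
    case False
    then have qpos: "0 < q t" using qt by simp
    have hol: "(\<lambda>z. F1 z - F2 z) holomorphic_on UNIV"
      unfolding F1_def F2_def by (intro holomorphic_intros)
    have ae0: "AE \<omega> in M. F1 (complex_of_real (X t \<omega>)) - F2 (complex_of_real (X t \<omega>)) = 0"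
      using ae unfolding S1 S2 by simp
    have z: "\<And>z. F1 z - F2 z = 0" by (rule zero_transfer[OF qpos hol ae0])
    have G: "\<And>z. G1 z - G2 z = 0"
    proof -
      fix z
      have "((\<lambda>z. F1 z - F2 z) has_field_derivative (G1 z - G2 z)) (at z)"
        unfolding F1_def F2_def G1_def G2_def by (intro derivative_intros expsum_deriv)
      moreover have "((\<lambda>z. F1 z - F2 z) has_field_derivative 0) (at z)"
        using z by simp
      ultimately show "G1 z - G2 z = 0" by (rule DERIV_unique)
    qed
    have G': "\<And>z. G1 z = G2 z" using G by (simp only: right_minus_eq)
    show ?thesis unfolding D1 D2 G' by simp
  qed
qed

end

theorem mainTheorem5:
  fixes M :: "'a measure" and I :: "real set" and F :: "real \<Rightarrow> 'a measure"
    and X :: "real \<Rightarrow> 'a \<Rightarrow> real" and q :: "real \<Rightarrow> real" and t :: real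
  assumes "prob_space M"
    and "time_index I"
    and "filtration M I F"
    and "sq_int_cont_martingale M I F X"
    and "deterministic_qv M I F X q"
    and "t \<in> I"
  shows
    "(\<forall>(N::nat) (l::nat \<Rightarrow> complex) (c::nat \<Rightarrow> complex).
        N \<ge> 1 \<longrightarrow> inj_on c {1..N} \<longrightarrow>
        (AE \<omega> in M. (\<Sum>k=1..N. l k * stoch_exp X q (c k) t \<omega>) = 0) \<longrightarrow>
        (AE \<omega> in M. (\<Sum>k=1..N. l k * c k * complex_of_real (q t) * stoch_exp X q (c k) t \<omega>) = 0))
     \<and>
     (\<forall>(N::nat) (l::nat \<Rightarrow> complex) (c::nat \<Rightarrow> complex)
       (N'::nat) (m::nat \<Rightarrow> complex) (d::nat \<Rightarrow> complex).
        (AE \<omega> in M. (\<Sum>k=1..N. l k * stoch_exp X q (c k) t \<omega>)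
                   = (\<Sum>k=1..N'. m k * stoch_exp X q (d k) t \<omega>)) \<longrightarrow>
        (AE \<omega> in M. (\<Sum>k=1..N. l k * c k * complex_of_real (q t) * stoch_exp X q (c k) t \<omega>)
                   = (\<Sum>k=1..N'. m k * d k * complex_of_real (q t) * stoch_exp X q (d k) t \<omega>)))"
proof -
  have I0t: "{0..t} \<subseteq> I" and t0: "0 \<le> t"
    using assms(2,6) unfolding time_index_def by auto
  have inI: "\<And>s. 0 \<le> s \<Longrightarrow> s \<le> t \<Longrightarrow> s \<in> I" using I0t by auto
  have fi: "\<forall>t\<in>I. subalgebra M (F t)" "\<forall>s\<in>I. \<forall>t\<in>I. s \<le> t \<longrightarrow> sets (F s) \<subseteq> sets (F t)"
    using assms(3) unfolding filtration_def by auto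
  have sq: "martingale M I F X" "\<forall>t\<in>I. integrable M (\<lambda>\<omega>. (X t \<omega>)\<^sup>2)"
     "AE \<omega> in M. continuous_on I (\<lambda>t. X t \<omega>)" "AE \<omega> in M. X 0 \<omega> = 0"
    using assms(4) unfolding sq_int_cont_martingale_def by auto
  have ma: "\<forall>t\<in>I. X t \<in> borel_measurable (F t)"
     "\<forall>s\<in>I. \<forall>t\<in>I. s \<le> t \<longrightarrow> (AE \<omega> in M. real_cond_exp M (F s) (X t) \<omega> = X s \<omega>)"
    using sq(1) unfolding martingale_def by auto
  have dq: "q 0 = 0" "continuous_on I q" "mono_on I q" "martingale M I F (\<lambda>t \<omega>. (X t \<omega>)\<^sup>2 - q t)"
    using assms(5) unfolding deterministic_qv_def by auto
  have ma2: "\<forall>s\<in>I. \<forall>t\<in>I. s \<le> t \<longrightarrow> (AE \<omega> in M. real_cond_exp M (F s) (\<lambda>\<omega>. (X t \<omega>)\<^sup>2 - q t) \<omega> = (X s \<omega>)\<^sup>2 - q s)"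
    using dq(4) unfolding martingale_def by auto
  interpret Q: qv_setup0 M F X q t
  proof (rule qv_setup0.intro)
   show "qv_setup0_axioms M X" by (rule qv_setup0_axioms.intro) (rule sq(4))
   show "qv_setup M F X q t"
   proof (rule qv_setup.intro)
    show "prob_space M" by (rule assms(1))
   show "qv_setup_axioms M F X q t"
   proof (rule qv_setup_axioms.intro)
    show "0 \<le> t" by (rule t0)
    show "\<And>s. 0 \<le> s \<Longrightarrow> s \<le> t \<Longrightarrow> subalgebra M (F s)" using fi(1) inI by auto
    show "\<And>s r. 0 \<le> s \<Longrightarrow> s \<le> r \<Longrightarrow> r \<le> t \<Longrightarrow> sets (F s) \<subseteq> sets (F r)" using fi(2) inI by auto
    show "\<And>s. 0 \<le> s \<Longrightarrow> s \<le> t \<Longrightarrow> X s \<in> borel_measurable (F s)" using ma(1) inI by auto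
    show "\<And>s. 0 \<le> s \<Longrightarrow> s \<le> t \<Longrightarrow> integrable M (\<lambda>\<omega>. (X s \<omega>)\<^sup>2)" using sq(2) inI by auto
    show "\<And>s r. 0 \<le> s \<Longrightarrow> s \<le> r \<Longrightarrow> r \<le> t \<Longrightarrow> AE \<omega> in M. real_cond_exp M (F s) (X r) \<omega> = X s \<omega>"
      using ma(2) inI by (meson order_trans)
    show "\<And>s r. 0 \<le> s \<Longrightarrow> s \<le> r \<Longrightarrow> r \<le> t \<Longrightarrow> AE \<omega> in M. real_cond_exp M (F s) (\<lambda>\<omega>. (X r \<omega>)\<^sup>2 - q r) \<omega> = (X s \<omega>)\<^sup>2 - q s"
      using ma2 inI by (meson order_trans)
    show "AE \<omega> in M. continuous_on {0..t} (\<lambda>s. X s \<omega>)"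
      using sq(3) by eventually_elim (rule continuous_on_subset[OF _ I0t])
    show "q 0 = 0" by (rule dq(1))
    show "continuous_on {0..t} q" by (rule continuous_on_subset[OF dq(2) I0t])
    show "\<And>s r. 0 \<le> s \<Longrightarrow> s \<le> r \<Longrightarrow> r \<le> t \<Longrightarrow> q s \<le> q r"
      using dq(3) inI by (meson mono_onD order_trans)
   qed
   qed
  qed
  show ?thesis
  proof (intro conjI allI impI)
    fix N :: nat and l c :: "nat \<Rightarrow> complex"
    assume ae: "AE \<omega> in M. (\<Sum>k=1..N. l k * stoch_exp X q (c k) t \<omega>) = 0"
    have "AE \<omega> in M. (\<Sum>k=1..N. l k * c k * complex_of_real (q t) * stoch_exp X q (c k) t \<omega>)
                   = (\<Sum>k\<in>{}. l k * c k * complex_of_real (q t) * stoch_exp X q (c k) t \<omega>)"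
      by (rule Q.main_transfer) (use ae in simp)
    then show "AE \<omega> in M. (\<Sum>k=1..N. l k * c k * complex_of_real (q t) * stoch_exp X q (c k) t \<omega>) = 0"
      by simp
  next
    fix N N' :: nat and l c m d :: "nat \<Rightarrow> complex"
    assume "AE \<omega> in M. (\<Sum>k=1..N. l k * stoch_exp X q (c k) t \<omega>) = (\<Sum>k=1..N'. m k * stoch_exp X q (d k) t \<omega>)"
    then show "AE \<omega> in M. (\<Sum>k=1..N. l k * c k * complex_of_real (q t) * stoch_exp X q (c k) t \<omega>)
                   = (\<Sum>k=1..N'. m k * d k * complex_of_real (q t) * stoch_exp X q (d k) t \<omega>)"
      by (rule Q.main_transfer)
  qed
qed



end
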